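(* Let $n>2$ be an even integer, $a\in\mathbb{R}$, $b\in\{1,-1\}$, and for $c\in\mathbb{R}$ let $\lambda_{\min}(c)$, $\lambda_{\max}(c)$ be the smallest and largest eigenvalues of the $(n+1)\times(n+1)$ symmetric matrix $m_n(a,b,c)$ (rows/columns indexed $0,\dots,n$, $(0,0)$-entry $-nc$, $(0,j)$- and $(j,0)$-entries $b$ for $j=1,\dots,n$, lower-right block the circulant $\mathrm{circ}(c,a,0,\dots,0,a)$). Define \[c_{\mathrm{upp}}=-\frac{(n-1)+2a}{n+1},\ \lambda_{\mathrm{upp}}=\frac{2n(a-1)}{n+1},\qquad c_{\mathrm{low}}=\frac{(n-1)-2a}{n+1},\ \lambda_{\mathrm{low}}=\frac{2n(a+1)}{n+1},\] and, for $a\ne0$, $c_{\mathrm{trans}}=\dfrac{8a^2-n}{4(n+1)a}$, $\lambda_{\mathrm{trans}}=-\dfrac{n(8a^2+1)}{4(n+1)a}$. Then $\min_{c\in\mathbb{R}}\lambda_{\max}(c)$ is attained at $(c,\lambda)=(c_{\mathrm{trans}},\lambda_{\mathrm{trans}})$ if $a\le-1/4$ and at $(c_{\mathrm{low}},\lambda_{\mathrm{low}})$ if $a>-1/4$; and $\max_{c\in\mathbb{R}}\lambda_{\min}(c)$ is attained at $(c_{\mathrm{trans}},\lambda_{\mathrm{trans}})$ if $a\ge1/4$ and at $(c_{\mathrm{upp}},\lambda_{\mathrm{upp}})$ if $a<1/4$. Moreover, whenever such an extremum is attained at the transition point $(c_{\mathrm{trans}},\lambda_{\mathrm{trans}})$,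 the corresponding eigenvalue of $m_n(a,b,c_{\mathrm{trans}})$ is double, and otherwise it is single. *)

theory Defs
  imports "Jordan_Normal_Form.Char_Poly"
begin

text \<open>Lower-right block (indices 1..n) is the symmetric circulant circ(c,a,0,...,0,a):
  entry (i,j) is c if i = j, a if j - i = 1 or -1 modulo n, and 0 otherwise.\<close>
definition mmat :: "nat \<Rightarrow> real \<Rightarrow> real \<Rightarrow> real \<Rightarrow> real mat" where
  "mmat n a b c = mat (n+1) (n+1) (\<lambda>(i,j).
     if i = 0 \<and> j = 0 then - real n * c
     else if i = 0 \<or> j = 0 then b
     else if i = j then c
     else if (int j - int i) mod int n = 1 \<or> (int i - int j) mod int n = 1 then a
     else 0)"

definition lam_min :: "nat \<Rightarrow> real \<Rightarrow> real \<Rightarrow> real \<Rightarrow> real" where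
  "lam_min n a b c = Min {k. eigenvalue (mmat n a b c) k}"

definition lam_max :: "nat \<Rightarrow> real \<Rightarrow> real \<Rightarrow> real \<Rightarrow> real" where
  "lam_max n a b c = Max {k. eigenvalue (mmat n a b c) k}"

text \<open>Multiplicity of an eigenvalue: multiplicity as a root of the characteristic polynomial
  (equal to the geometric multiplicity, since the matrix is symmetric).\<close>
definition eig_mult :: "real mat \<Rightarrow> real \<Rightarrow> nat" where
  "eig_mult M k = order k (char_poly M)"

definition c_upp :: "nat \<Rightarrow> real \<Rightarrow> real" where
  "c_upp n a = - ((real n - 1) + 2*a) / (real n + 1)"
definition l_upp :: "nat \<Rightarrow> real \<Rightarrow> real" where
  "l_upp n a = 2 * real n * (a - 1) / (real n + 1)"
definition c_low :: "nat \<Rightarrow> real \<Rightarrow> real" where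
  "c_low n a = ((real n - 1) - 2*a) / (real n + 1)"
definition l_low :: "nat \<Rightarrow> real \<Rightarrow> real" where
  "l_low n a = 2 * real n * (a + 1) / (real n + 1)"
definition c_trans :: "nat \<Rightarrow> real \<Rightarrow> real" where
  "c_trans n a = (8*a^2 - real n) / (4 * (real n + 1) * a)"
definition l_trans :: "nat \<Rightarrow> real \<Rightarrow> real" where
  "l_trans n a = - (real n * (8*a^2 + 1)) / (4 * (real n + 1) * a)"

end

theory Submission
  imports Defs "Jordan_Normal_Form.Jordan_Normal_Form_Uniqueness" "Jordan_Normal_Form.Jordan_Normal_Form_Existence"
begin

lemma real_sym_ev_real:
  fixes A :: "real mat"
  assumes A: "A \<in> carrier_mat N N" and sym: "\<And>i j. i<N \<Longrightarrow> j<N \<Longrightarrow> A$$(i,j) = A$$(j,i)"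
    and ev: "eigenvalue (map_mat complex_of_real A) z"
  shows "Im z = 0"
proof -
  let ?Ac = "map_mat complex_of_real A"
  from ev obtain v where v: "v \<in> carrier_vec N" "v \<noteq> 0\<^sub>v N" "?Ac *\<^sub>v v = z \<cdot>\<^sub>v v"
    unfolding eigenvalue_def eigenvector_def using A by auto
  have Av: "(?Ac *\<^sub>v v) $ i = (\<Sum>j<N. complex_of_real (A$$(i,j)) * v$j)" if "i < N" for i
    using that A v(1) by (auto simp: scalar_prod_def lessThan_atLeast0 intro!: sum.cong)
  define s where "s = (\<Sum>i<N. cnj (v$i) * (?Ac *\<^sub>v v) $ i)"
  define R where "R = (\<Sum>i<N. cnj (v$i) * v$i)"
  have s1: "s = z * R" unfolding s_def R_def using v(3) v(1)
    by (auto simp: sum_distrib_left intro!: sum.cong)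
  have s2: "s = (\<Sum>i<N. \<Sum>j<N. complex_of_real (A$$(i,j)) * (cnj (v$i) * v$j))"
    unfolding s_def by (auto simp: Av sum_distrib_left intro!: sum.cong)
  have "cnj s = (\<Sum>i<N. \<Sum>j<N. complex_of_real (A$$(i,j)) * (v$i * cnj (v$j)))"
    unfolding s2 by (simp add: mult.commute)
  also have "\<dots> = (\<Sum>j<N. \<Sum>i<N. complex_of_real (A$$(i,j)) * (v$i * cnj (v$j)))"
    by (rule sum.swap)
  also have "\<dots> = s" unfolding s2 using sym
    by (auto intro!: sum.cong simp: mult.commute)
  finally have cs: "cnj s = s" .
  have Rr: "R = complex_of_real (\<Sum>i<N. (cmod (v$i))^2)"
    unfolding R_def of_real_sum by (intro sum.cong refl) (metis complex_norm_square mult.commute of_real_power)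
  obtain i where i: "i < N" "v $ i \<noteq> 0" using v(1,2) by (metis eq_vecI carrier_vecD index_zero_vec)
  have "(\<Sum>i<N. (cmod (v$i))^2) > 0"
  proof -
    have "(\<Sum>i<N. (cmod (v$i))^2) \<ge> (cmod (v$i))^2"
      by (rule member_le_sum) (use i in auto)
    moreover have "(cmod (v$i))^2 > 0" using i by auto
    ultimately show ?thesis by linarith
  qed
  hence R0: "R \<noteq> 0" unfolding Rr by (metis less_irrefl of_real_eq_0_iff)
  have "cnj R = R" unfolding Rr by (simp only: complex_cnj_complex_of_real)
  from cs[unfolded s1] have "cnj z * R = z * R" using \<open>cnj R = R\<close> by simp
  hence "cnj z = z" using R0 by simp
  thus ?thesis by (metis Reals_cnj_iff complex_is_Real_iff)
qed

lemma map_poly_of_real_inj: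
  assumes "map_poly complex_of_real p = map_poly complex_of_real q"
  shows "p = q"
proof (rule poly_eqI)
  fix i
  have "coeff (map_poly complex_of_real p) i = coeff (map_poly complex_of_real q) i"
    using assms by simp
  thus "coeff p i = coeff q i" by (simp add: of_real_hom.coeff_map_poly_hom)
qed

lemma map_poly_of_real_linprod:
  "map_poly complex_of_real (\<Prod>e\<leftarrow>es. [:- e, 1:]) = (\<Prod>e\<leftarrow>es. [:- complex_of_real e, 1:])"
proof (induction es)
  case Nil
  then show ?case by simp
next
  case (Cons e es)
  have "map_poly complex_of_real (\<Prod>e\<leftarrow>e#es. [:- e, 1:])
     = map_poly complex_of_real [:- e, 1:] * map_poly complex_of_real (\<Prod>e\<leftarrow>es. [:- e, 1:])"
  proof -
    interpret m: map_poly_comm_ring_hom "complex_of_real" ..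
    show ?thesis by (simp only: list.map prod_list.Cons m.hom_mult)
  qed
  also have "\<dots> = [:- complex_of_real e, 1:] * (\<Prod>e\<leftarrow>es. [:- complex_of_real e, 1:])"
    using Cons by simp
  finally show ?case by simp
qed

lemma real_sym_char_poly_split:
  fixes A :: "real mat"
  assumes A: "A \<in> carrier_mat N N" and symA: "\<And>i j. i<N \<Longrightarrow> j<N \<Longrightarrow> A$$(i,j) = A$$(j,i)"
  shows "\<exists>es. char_poly A = (\<Prod>e\<leftarrow>es. [:- e, 1:])"
proof -
  let ?Ac = "map_mat complex_of_real A"
  have Ac: "?Ac \<in> carrier_mat N N" using A by simp
  from char_poly_factorized[OF Ac] obtain zs where zs: "char_poly ?Ac = (\<Prod>a\<leftarrow>zs. [:- a, 1:])" by auto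
  have cp: "char_poly ?Ac = map_poly complex_of_real (char_poly A)"
    by (rule of_real_hom.char_poly_hom[OF A])
  have real: "z = complex_of_real (Re z)" if z: "z \<in> set zs" for z
  proof -
    have "poly (char_poly ?Ac) z = 0" unfolding zs using z by (rule linear_poly_root)
    hence "eigenvalue ?Ac z" using eigenvalue_root_char_poly[OF Ac] by simp
    note real_sym_ev_real[OF A symA this]
    hence "Im z = 0" .
    thus ?thesis by (simp add: complex_eq_iff)
  qed
  have "(\<Prod>a\<leftarrow>zs. [:- a, 1:]) = (\<Prod>e\<leftarrow>map Re zs. [:- complex_of_real e, 1:])"
    using real by (induction zs) auto
  also have "\<dots> = map_poly complex_of_real (\<Prod>e\<leftarrow>map Re zs. [:- e, 1:])"
    by (rule map_poly_of_real_linprod[symmetric])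
  finally have "map_poly complex_of_real (char_poly A) = map_poly complex_of_real (\<Prod>e\<leftarrow>map Re zs. [:- e, 1:])"
    using cp zs by simp
  hence "char_poly A = (\<Prod>e\<leftarrow>map Re zs. [:- e, 1:])" by (rule map_poly_of_real_inj)
  thus ?thesis by blast
qed

lemma order_jordan_prod:
  fixes ev :: real and n_as :: "(nat \<times> real) list"
  shows "Polynomial.order ev (\<Prod>(d, a)\<leftarrow>n_as. [:- a, 1:] ^ d) = (\<Sum>d \<leftarrow> map fst [(d, e)\<leftarrow>n_as . e = ev]. d)"
proof (induction n_as)
  case Nil
  then show ?case by simp
next
  case (Cons da n_as)
  obtain d a where da: "da = (d,a)" by force
  have nz: "[:- a, 1:] ^ d \<noteq> 0" by simp
  have nz2: "(\<Prod>(d, a)\<leftarrow>n_as. [:- a, 1:] ^ d) \<noteq> 0"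
  proof -
    have "monic (\<Prod>(d, a)\<leftarrow>n_as. [:- a, (1::real):] ^ d)"
      by (rule monic_prod_list) (auto intro: monic_power)
    thus ?thesis by auto
  qed
  have o1: "Polynomial.order ev ([:- a, 1:] ^ d) = (if a = ev then d else 0)"
  proof (cases "a = ev")
    case True
    then show ?thesis by (simp add: order_power_n_n)
  next
    case False
    hence "poly ([:- a, 1:] ^ d) ev \<noteq> 0" by simp
    then show ?thesis using False by (simp add: order_0I)
  qed
  have "Polynomial.order ev (\<Prod>(d, a)\<leftarrow>da#n_as. [:- a, 1:] ^ d)
     = Polynomial.order ev ([:- a, 1:] ^ d * (\<Prod>(d, a)\<leftarrow>n_as. [:- a, 1:] ^ d))"
    by (simp add: da)
  also have "\<dots> = Polynomial.order ev ([:- a, 1:] ^ d) + Polynomial.order ev (\<Prod>(d, a)\<leftarrow>n_as. [:- a, 1:] ^ d)"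
    by (rule order_mult) (use nz nz2 in simp)
  finally show ?case using Cons o1 da by auto
qed

lemma sym_sq_kernel:
  fixes S :: "real mat"
  assumes S: "S \<in> carrier_mat N N" and symS: "\<And>i j. i<N \<Longrightarrow> j<N \<Longrightarrow> S$$(i,j) = S$$(j,i)"
    and v: "v \<in> carrier_vec N" and z: "S *\<^sub>v (S *\<^sub>v v) = 0\<^sub>v N"
  shows "S *\<^sub>v v = 0\<^sub>v N"
proof -
  define w where "w = S *\<^sub>v v"
  have w: "w \<in> carrier_vec N" unfolding w_def using S v by simp
  have ST: "transpose_mat S = S"
    using S symS by (auto intro!: eq_matI)
  have "(transpose_mat S *\<^sub>v w) \<bullet> v = w \<bullet> (S *\<^sub>v v)"
    by (rule transpose_vec_mult_scalar[OF S v w])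
  hence "w \<bullet> w = 0" using z v unfolding ST w_def[symmetric] by simp
  hence "(\<Sum>i<N. w$i * w$i) = 0" using w by (simp add: scalar_prod_def lessThan_atLeast0)
  hence "\<forall>i\<in>{..<N}. w$i * w$i = 0"
    by (subst sum_nonneg_eq_0_iff[symmetric]) auto
  hence "\<And>i. i < N \<Longrightarrow> w$i = 0" by auto
  thus ?thesis unfolding w_def[symmetric] using w by (intro eq_vecI) auto
qed

lemma sym_pow_kernel:
  fixes S :: "real mat"
  assumes S: "S \<in> carrier_mat N N" and symS: "\<And>i j. i<N \<Longrightarrow> j<N \<Longrightarrow> S$$(i,j) = S$$(j,i)"
  shows "mat_kernel (S ^\<^sub>m Suc m) = mat_kernel S"
proof -
  have main: "\<And>v. v \<in> carrier_vec N \<Longrightarrow> (S ^\<^sub>m Suc m) *\<^sub>v v = 0\<^sub>v N \<longleftrightarrow> S *\<^sub>v v = 0\<^sub>v N"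
  proof (induction m)
    case 0
    then show ?case using S by simp
  next
    case (Suc m)
    have Sv: "S *\<^sub>v v \<in> carrier_vec N" using S Suc.prems by simp
    have eq: "(S ^\<^sub>m Suc (Suc m)) *\<^sub>v v = (S ^\<^sub>m Suc m) *\<^sub>v (S *\<^sub>v v)"
      using S Suc.prems by (simp, subst assoc_mult_mat_vec[of _ N N _ N]) (auto intro!: mult_carrier_mat[of _ N N _ N] pow_carrier_mat)
    show ?case unfolding eq Suc.IH[OF Sv]
      using sym_sq_kernel[OF S symS Suc.prems] S Suc.prems by auto
  qed
  have c: "S ^\<^sub>m Suc m \<in> carrier_mat N N" using S by (rule pow_carrier_mat)
  show ?thesis unfolding mat_kernel_def using S c main by auto
qed

lemma real_sym_order_kernel:
  fixes A :: "real mat"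
  assumes A: "A \<in> carrier_mat N N" and symA: "\<And>i j. i<N \<Longrightarrow> j<N \<Longrightarrow> A$$(i,j) = A$$(j,i)"
    and N: "0 < N"
  shows "Polynomial.order ev (char_poly A) = kernel_dim (char_matrix A ev)"
proof -
  from real_sym_char_poly_split[OF A symA] obtain es where es: "char_poly A = (\<Prod>e\<leftarrow>es. [:- e, 1:])" by auto
  from jordan_nf_exists[OF A es] obtain n_as where jnf: "jordan_nf A n_as" by auto
  hence sim: "similar_mat A (jordan_matrix n_as)" unfolding jordan_nf_def by auto
  have "char_poly A = char_poly (jordan_matrix n_as)" by (rule char_poly_similar[OF sim])
  hence ord: "Polynomial.order ev (char_poly A) = (\<Sum>d \<leftarrow> map fst [(d, e)\<leftarrow>n_as . e = ev]. d)"
    by (simp add: jordan_matrix_char_poly order_jordan_prod)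
  from similar_matD[OF sim] obtain n' where "A \<in> carrier_mat n' n'" "jordan_matrix n_as \<in> carrier_mat n' n'" by auto
  hence sumN: "sum_list (map fst n_as) = N" using A jordan_matrix_carrier[of n_as] by (metis carrier_matD(1))
  have le: "d \<le> N" if "d \<in> set (map fst [(d, e)\<leftarrow>n_as . e = ev])" for d
  proof -
    from that have "d \<in> set (map fst n_as)" by auto
    hence "d \<le> sum_list (map fst n_as)" by (rule member_le_sum_list) auto
    thus ?thesis using sumN by simp
  qed
  have "dim_gen_eigenspace A ev N = (\<Sum>d \<leftarrow> map fst [(d, e)\<leftarrow>n_as . e = ev]. min N d)"
    by (rule dim_gen_eigenspace[OF jnf])
  also have "\<dots> = (\<Sum>d \<leftarrow> map fst [(d, e)\<leftarrow>n_as . e = ev]. d)"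
    by (rule arg_cong[of _ _ sum_list], rule map_cong) (use le in auto)
  finally have dg: "dim_gen_eigenspace A ev N = Polynomial.order ev (char_poly A)" using ord by simp
  define S where "S = char_matrix A ev"
  have S: "S \<in> carrier_mat N N" unfolding S_def char_matrix_def using A by auto
  have symS: "S$$(i,j) = S$$(j,i)" if "i<N" "j<N" for i j
    unfolding S_def char_matrix_def using A symA that by auto
  obtain m where m: "N = Suc m" using N by (cases N) auto
  have ker: "mat_kernel (S ^\<^sub>m N) = mat_kernel S" unfolding m by (rule sym_pow_kernel[OF S symS])
  have "dim_gen_eigenspace A ev N = kernel_dim (S ^\<^sub>m N)" unfolding dim_gen_eigenspace_def S_def ..
  also have "\<dots> = kernel_dim S" unfolding kernel_dim_def using S ker by simp
  finally show ?thesis using dg S_def by simp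
qed

lemma (in kernel) lincomb2:
  assumes u1: "u1 \<in> mat_kernel A" and u2: "u2 \<in> mat_kernel A" and ne: "u1 \<noteq> u2"
  shows "lincomb c {u1, u2} = c u1 \<cdot>\<^sub>v u1 + c u2 \<cdot>\<^sub>v u2"
proof -
  have "lincomb c ({u2} \<union> {u1}) = (c u1 \<cdot>\<^sub>v u1) + lincomb c {u2}"
    by (rule Ker.lincomb_insert) (use u1 u2 ne in auto)
  moreover have "lincomb c ({} \<union> {u2}) = (c u2 \<cdot>\<^sub>v u2) + lincomb c {}"
    by (rule Ker.lincomb_insert) (use u1 u2 ne in auto)
  moreover have "lincomb c {} = 0\<^sub>v nc" unfolding Ker.lincomb_def by simp
  moreover have "u2 \<in> carrier_vec nc" "u1 \<in> carrier_vec nc" using mat_kernelD[OF A u2] mat_kernelD[OF A u1] by auto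
  ultimately show ?thesis using ne 
    by (simp add: insert_commute)
qed

lemma (in kernel) lincomb1:
  assumes u1: "u1 \<in> mat_kernel A"
  shows "lincomb c {u1} = c u1 \<cdot>\<^sub>v u1"
proof -
  have "lincomb c ({} \<union> {u1}) = (c u1 \<cdot>\<^sub>v u1) + lincomb c {}"
    by (rule Ker.lincomb_insert) (use u1 in auto)
  moreover have "lincomb c {} = 0\<^sub>v nc" unfolding Ker.lincomb_def by simp
  moreover have "u1 \<in> carrier_vec nc" using mat_kernelD[OF A u1] by auto
  ultimately show ?thesis by simp
qed

lemma kernel_dim_2:
  fixes S :: "real mat"
  assumes S: "S \<in> carrier_mat N N" and u1: "u1 \<in> carrier_vec N" and u2: "u2 \<in> carrier_vec N"
   and indep: "\<And>\<alpha> \<beta>. \<alpha> \<cdot>\<^sub>v u1 + \<beta> \<cdot>\<^sub>v u2 = 0\<^sub>v N \<Longrightarrow> \<alpha> = 0 \<and> \<beta> = 0"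
   and ker: "\<And>v. v \<in> carrier_vec N \<Longrightarrow> S *\<^sub>v v = 0\<^sub>v N \<longleftrightarrow> (\<exists>\<alpha> \<beta>. v = \<alpha> \<cdot>\<^sub>v u1 + \<beta> \<cdot>\<^sub>v u2)"
  shows "kernel_dim S = 2"
proof -
  interpret kernel N N S by (unfold_locales, rule S)
  have mk: "mat_kernel S = {v. v \<in> carrier_vec N \<and> (\<exists>\<alpha> \<beta>. v = \<alpha> \<cdot>\<^sub>v u1 + \<beta> \<cdot>\<^sub>v u2)}"
    unfolding mat_kernel_def using S ker by auto
  have "u1 = 1 \<cdot>\<^sub>v u1 + 0 \<cdot>\<^sub>v u2" using u1 u2 by auto
  hence k1: "u1 \<in> mat_kernel S" unfolding mk using u1 by blast
  have "u2 = 0 \<cdot>\<^sub>v u1 + 1 \<cdot>\<^sub>v u2" using u1 u2 by auto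
  hence k2: "u2 \<in> mat_kernel S" unfolding mk using u2 by blast
  have ne: "u1 \<noteq> u2"
  proof
    assume "u1 = u2"
    hence "1 \<cdot>\<^sub>v u1 + (-1) \<cdot>\<^sub>v u2 = 0\<^sub>v N" using u1 by (auto intro!: eq_vecI)
    from indep[OF this] show False by simp
  qed
  have li: "lin_indpt {u1, u2}"
  proof (rule Ker.finite_lin_indpt2)
    fix c
    assume "lincomb c {u1, u2} = 0\<^sub>v N"
    hence "c u1 \<cdot>\<^sub>v u1 + c u2 \<cdot>\<^sub>v u2 = 0\<^sub>v N" using lincomb2[OF k1 k2 ne] by simp
    from indep[OF this] show "\<forall>v\<in>{u1, u2}. c v = 0" by simp
  qed (use k1 k2 in auto)
  have gs: "gen_set {u1, u2}"
  proof -
    have "span {u1, u2} = {lincomb c {u1, u2} | c. c \<in> {u1, u2} \<rightarrow> UNIV}"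
      by (rule Ker.finite_span) (use k1 k2 in auto)
    also have "\<dots> = mat_kernel S"
    proof
      show "{lincomb c {u1, u2} | c. c \<in> {u1, u2} \<rightarrow> UNIV} \<subseteq> mat_kernel S"
      proof
        fix v assume "v \<in> {lincomb c {u1, u2} | c. c \<in> {u1, u2} \<rightarrow> UNIV}"
        then obtain c where "v = lincomb c {u1, u2}" by auto
        hence "v = c u1 \<cdot>\<^sub>v u1 + c u2 \<cdot>\<^sub>v u2" using lincomb2[OF k1 k2 ne] by simp
        thus "v \<in> mat_kernel S" unfolding mk using u1 u2 by auto
      qed
      show "mat_kernel S \<subseteq> {lincomb c {u1, u2} | c. c \<in> {u1, u2} \<rightarrow> UNIV}"
      proof
        fix v assume "v \<in> mat_kernel S"
        then obtain \<alpha> \<beta> where v: "v = \<alpha> \<cdot>\<^sub>v u1 + \<beta> \<cdot>\<^sub>v u2" unfolding mk by auto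
        define c where "c = (\<lambda>w. if w = u1 then \<alpha> else \<beta>)"
        have "lincomb c {u1, u2} = v" unfolding lincomb2[OF k1 k2 ne] v c_def using ne by simp
        thus "v \<in> {lincomb c {u1, u2} | c. c \<in> {u1, u2} \<rightarrow> UNIV}" by auto
      qed
    qed
    finally show ?thesis by simp
  qed
  have "basis {u1, u2}" unfolding Ker.basis_def using li gs k1 k2 by auto
  from Ker.dim_basis[OF _ this] have "dim = 2" using ne by simp
  thus ?thesis by simp
qed

lemma kernel_dim_1:
  fixes S :: "real mat"
  assumes S: "S \<in> carrier_mat N N" and u1: "u1 \<in> carrier_vec N" and nz: "u1 \<noteq> 0\<^sub>v N"
   and ker: "\<And>v. v \<in> carrier_vec N \<Longrightarrow> S *\<^sub>v v = 0\<^sub>v N \<longleftrightarrow> (\<exists>\<alpha>. v = \<alpha> \<cdot>\<^sub>v u1)"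
  shows "kernel_dim S = 1"
proof -
  interpret kernel N N S by (unfold_locales, rule S)
  have mk: "mat_kernel S = {v. v \<in> carrier_vec N \<and> (\<exists>\<alpha>. v = \<alpha> \<cdot>\<^sub>v u1)}"
    unfolding mat_kernel_def using S ker by auto
  have k1: "u1 \<in> mat_kernel S" unfolding mk using u1
    by (auto intro!: exI[of _ 1])
  obtain i where i: "i < N" "u1 $ i \<noteq> 0" using nz u1 by (metis eq_vecI carrier_vecD index_zero_vec)
  have li: "lin_indpt {u1}"
  proof (rule Ker.finite_lin_indpt2)
    fix c
    assume "lincomb c {u1} = 0\<^sub>v N"
    hence "c u1 \<cdot>\<^sub>v u1 = 0\<^sub>v N" using lincomb1[OF k1] by simp
    hence "c u1 * u1 $ i = 0" using u1 i by (metis index_smult_vec(1) index_zero_vec(1) carrier_vecD)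
    hence "c u1 = 0" using \<open>u1 $ i \<noteq> 0\<close> by simp
    thus "\<forall>v\<in>{u1}. c v = 0" by simp
  qed (use k1 in auto)
  have gs: "gen_set {u1}"
  proof -
    have "span {u1} = {lincomb c {u1} | c. c \<in> {u1} \<rightarrow> UNIV}"
      by (rule Ker.finite_span) (use k1 in auto)
    also have "\<dots> = mat_kernel S"
    proof
      show "{lincomb c {u1} | c. c \<in> {u1} \<rightarrow> UNIV} \<subseteq> mat_kernel S"
      proof
        fix v assume "v \<in> {lincomb c {u1} | c. c \<in> {u1} \<rightarrow> UNIV}"
        then obtain c where "v = lincomb c {u1}" by auto
        hence "v = c u1 \<cdot>\<^sub>v u1" using lincomb1[OF k1] by simp
        thus "v \<in> mat_kernel S" unfolding mk using u1 by auto
      qed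
      show "mat_kernel S \<subseteq> {lincomb c {u1} | c. c \<in> {u1} \<rightarrow> UNIV}"
      proof
        fix v assume "v \<in> mat_kernel S"
        then obtain \<alpha> where v: "v = \<alpha> \<cdot>\<^sub>v u1" unfolding mk by auto
        define c where "c = (\<lambda>w::real vec. \<alpha>)"
        have "lincomb c {u1} = v" unfolding lincomb1[OF k1] v c_def by simp
        thus "v \<in> {lincomb c {u1} | c. c \<in> {u1} \<rightarrow> UNIV}" by auto
      qed
    qed
    finally show ?thesis by simp
  qed
  have "basis {u1}" unfolding Ker.basis_def using li gs k1 by auto
  from Ker.dim_basis[OF _ this] have "dim = 1" by simp
  thus ?thesis by simp
qed

definition nx :: "nat \<Rightarrow> nat \<Rightarrow> nat" where "nx n k = (k + 1) mod n"
definition pv :: "nat \<Rightarrow> nat \<Rightarrow> nat" where "pv n k = (k + n - 1) mod n"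

lemma int_mod_one_iff:
  fixes d :: int and n :: nat
  assumes "- int n < d" "d < int n" "n \<ge> 2"
  shows "d mod int n = 1 \<longleftrightarrow> d = 1 \<or> d = 1 - int n"
proof (cases "d \<ge> 0")
  case True
  hence "d mod int n = d" using assms by simp
  then show ?thesis using True assms by auto
next
  case False
  have "d mod int n = (d + int n) mod int n" by simp
  also have "\<dots> = d + int n" using assms False by (intro mod_pos_pos_trivial) auto
  finally show ?thesis using False assms by auto
qed

lemma mod_cond_nx:
  assumes "j < n" "k < n" "n \<ge> 2"
  shows "(int j - int k) mod int n = 1 \<longleftrightarrow> j = nx n k"
proof -
  have "(int j - int k) mod int n = 1 \<longleftrightarrow> (int j - int k = 1 \<or> int j - int k = 1 - int n)"
    by (rule int_mod_one_iff) (use assms in auto)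
  also have "\<dots> \<longleftrightarrow> j = nx n k"
  proof (cases "k + 1 < n")
    case True
    then show ?thesis unfolding nx_def using assms by auto
  next
    case False
    hence "k + 1 = n" using assms by auto
    then show ?thesis unfolding nx_def using assms by auto
  qed
  finally show ?thesis .
qed

lemma nx_pv:
  assumes "j < n" "k < n"
  shows "k = nx n j \<longleftrightarrow> j = pv n k"
proof (cases "j + 1 < n")
  case True
  then show ?thesis unfolding nx_def pv_def using assms
    by (auto simp: mod_if)
next
  case False
  hence "j + 1 = n" using assms by auto
  then show ?thesis unfolding nx_def pv_def using assms by (auto simp: mod_if)
qed

lemma nx_lt: "n > 0 \<Longrightarrow> nx n k < n" unfolding nx_def by simp
lemma pv_lt: "n > 0 \<Longrightarrow> pv n k < n" unfolding pv_def by simp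

lemma nx_ne: "k < n \<Longrightarrow> n \<ge> 2 \<Longrightarrow> nx n k \<noteq> k"
proof -
  assume "k < n" "n \<ge> 2"
  show ?thesis
  proof (cases "k + 1 < n")
    case False
    hence "k + 1 = n" using \<open>k < n\<close> by auto
    thus ?thesis unfolding nx_def using \<open>n \<ge> 2\<close> by auto
  qed (auto simp: nx_def)
qed
lemma pv_ne: "k < n \<Longrightarrow> n \<ge> 2 \<Longrightarrow> pv n k \<noteq> k"
  unfolding pv_def by (cases "k = 0") (auto simp: mod_if)
lemma nx_pv_ne: "k < n \<Longrightarrow> n \<ge> 3 \<Longrightarrow> nx n k \<noteq> pv n k"
  unfolding pv_def nx_def by (cases "k = 0"; cases "k + 1 < n") (auto simp: mod_if)

lemma pv_nx: "k < n \<Longrightarrow> pv n (nx n k) = k"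
  using nx_pv[of k n "nx n k"] nx_lt[of n k] by auto

lemma sum_nx: 
  fixes f :: "nat \<Rightarrow> real"
  assumes "n > 0"
  shows "(\<Sum>k<n. f (nx n k)) = (\<Sum>k<n. f k)"
proof -
  have "bij_betw (nx n) {..<n} {..<n}"
  proof (rule bij_betwI[where g="pv n"])
    show "nx n \<in> {..<n} \<rightarrow> {..<n}" using nx_lt assms by auto
    show "pv n \<in> {..<n} \<rightarrow> {..<n}" using pv_lt assms by auto
    show "pv n (nx n x) = x" if "x \<in> {..<n}" for x using pv_nx that by auto
    show "nx n (pv n y) = y" if "y \<in> {..<n}" for y using nx_pv[of "pv n y" n y] pv_lt assms that by auto
  qed
  thus ?thesis by (rule sum.reindex_bij_betw)
qed

lemma sum3:
  fixes g :: "nat \<Rightarrow> real"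
  assumes k: "k < n" and n: "n \<ge> 3"
  shows "(\<Sum>j<n. (if j = k then c else if j = nx n k \<or> j = pv n k then a else 0) * g j)
       = c * g k + a * g (nx n k) + a * g (pv n k)"
proof -
  have d1: "nx n k \<noteq> k" "pv n k \<noteq> k" "nx n k \<noteq> pv n k"
    using nx_ne[OF k] pv_ne[OF k] nx_pv_ne[OF k n] n by auto
  have "(\<Sum>j<n. (if j = k then c else if j = nx n k \<or> j = pv n k then a else 0) * g j)
     = (\<Sum>j<n. (if j = k then c * g j else 0) + (if j = nx n k then a * g j else 0) + (if j = pv n k then a * g j else 0))"
    by (rule sum.cong) (use d1 in auto)
  also have "\<dots> = c * g k + a * g (nx n k) + a * g (pv n k)"
    using k nx_lt[of n k] pv_lt[of n k] n by (simp add: sum.distrib)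
  finally show ?thesis .
qed

lemma mmat_carrier: "mmat n a b c \<in> carrier_mat (n+1) (n+1)"
  unfolding mmat_def by simp

lemma mmat_00: "mmat n a b c $$ (0,0) = - real n * c"
  unfolding mmat_def by simp
lemma mmat_0S: "j < n \<Longrightarrow> mmat n a b c $$ (0, Suc j) = b"
  unfolding mmat_def by simp
lemma mmat_S0: "j < n \<Longrightarrow> mmat n a b c $$ (Suc j, 0) = b"
  unfolding mmat_def by simp
lemma mmat_SS:
  assumes "k < n" "j < n" "n \<ge> 2"
  shows "mmat n a b c $$ (Suc k, Suc j) = (if j = k then c else if j = nx n k \<or> j = pv n k then a else 0)"
proof -
  have e1: "(int (Suc j) - int (Suc k)) mod int n = 1 \<longleftrightarrow> j = nx n k"
    using mod_cond_nx[of j n k] assms by simp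
  have e2: "(int (Suc k) - int (Suc j)) mod int n = 1 \<longleftrightarrow> j = pv n k"
    using mod_cond_nx[of k n j] nx_pv[of j n k] assms by simp
  show ?thesis unfolding mmat_def using assms e1 e2 by simp
qed

lemma mmat_sym:
  assumes "i < n+1" "j < n+1"
  shows "mmat n a b c $$ (i,j) = mmat n a b c $$ (j,i)"
  unfolding mmat_def using assms by auto

lemma mmat_row0:
  assumes v: "v \<in> carrier_vec (n+1)"
  shows "(mmat n a b c *\<^sub>v v) $ 0 = - real n * c * v$0 + b * (\<Sum>k<n. v $ Suc k)"
proof -
  have "(mmat n a b c *\<^sub>v v) $ 0 = (\<Sum>j<Suc n. mmat n a b c $$ (0,j) * v$j)"
    using v mmat_carrier[of n a b c] by (simp add: scalar_prod_def lessThan_atLeast0 row_def)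
  also have "\<dots> = mmat n a b c $$ (0,0) * v$0 + (\<Sum>j<n. mmat n a b c $$ (0,Suc j) * v$(Suc j))"
    by (simp only: sum.lessThan_Suc_shift)
  also have "\<dots> = - real n * c * v$0 + b * (\<Sum>k<n. v $ Suc k)"
    by (simp add: mmat_00 mmat_0S sum_distrib_left)
  finally show ?thesis .
qed

lemma mmat_rowS:
  assumes v: "v \<in> carrier_vec (n+1)" and k: "k < n" and n: "n \<ge> 3"
  shows "(mmat n a b c *\<^sub>v v) $ Suc k = b * v$0 + c * v$(Suc k) + a * v$(Suc (nx n k)) + a * v$(Suc (pv n k))"
proof -
  have "(mmat n a b c *\<^sub>v v) $ Suc k = (\<Sum>j<Suc n. mmat n a b c $$ (Suc k,j) * v$j)"
    using v k mmat_carrier[of n a b c] by (simp add: scalar_prod_def lessThan_atLeast0 row_def)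
  also have "\<dots> = mmat n a b c $$ (Suc k,0) * v$0 + (\<Sum>j<n. mmat n a b c $$ (Suc k,Suc j) * v$(Suc j))"
    by (simp only: sum.lessThan_Suc_shift)
  also have "(\<Sum>j<n. mmat n a b c $$ (Suc k,Suc j) * v$(Suc j))
     = (\<Sum>j<n. (if j = k then c else if j = nx n k \<or> j = pv n k then a else 0) * v$(Suc j))"
    by (rule sum.cong) (use k n mmat_SS in auto)
  also have "\<dots> = c * v$(Suc k) + a * v$(Suc (nx n k)) + a * v$(Suc (pv n k))"
    by (rule sum3[OF k n])
  finally show ?thesis using mmat_S0[OF k] by simp
qed

lemma eig_form:
  assumes v: "v \<in> carrier_vec (n+1)" and ev: "mmat n a b c *\<^sub>v v = k \<cdot>\<^sub>v v" and n: "n \<ge> 3"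
  shows "k * ((v$0)^2 + (\<Sum>j<n. (v$Suc j)^2)) = - real n * c * (v$0)^2 + 2 * b * v$0 * (\<Sum>j<n. v$Suc j)
     + c * (\<Sum>j<n. (v$Suc j)^2) + 2 * a * (\<Sum>j<n. v$Suc j * v$Suc (nx n j))"
proof -
  define x where "x j = v $ Suc j" for j
  have r0: "- real n * c * v$0 + b * (\<Sum>j<n. x j) = k * v$0"
    using mmat_row0[OF v, of a b c] ev v unfolding x_def by simp
  have rj: "b * v$0 + c * x j + a * x (nx n j) + a * x (pv n j) = k * x j" if "j < n" for j
    using mmat_rowS[OF v that n, of a b c] ev v that unfolding x_def by simp
  have "(\<Sum>j<n. x j * (b * v$0 + c * x j + a * x (nx n j) + a * x (pv n j))) = (\<Sum>j<n. x j * (k * x j))"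
    by (rule sum.cong) (use rj in auto)
  hence e1: "b * v$0 * (\<Sum>j<n. x j) + c * (\<Sum>j<n. (x j)^2) + a * (\<Sum>j<n. x j * x (nx n j)) + a * (\<Sum>j<n. x j * x (pv n j))
      = k * (\<Sum>j<n. (x j)^2)"
    by (simp add: algebra_simps sum.distrib sum_distrib_left power2_eq_square)
  have "(\<Sum>j<n. x j * x (pv n j)) = (\<Sum>j<n. x (nx n j) * x (pv n (nx n j)))"
    using sum_nx[of n "\<lambda>j. x j * x (pv n j)"] n by simp
  also have "\<dots> = (\<Sum>j<n. x j * x (nx n j))"
    by (rule sum.cong) (auto simp: pv_nx)
  finally have e2: "(\<Sum>j<n. x j * x (pv n j)) = (\<Sum>j<n. x j * x (nx n j))" .
  have "v$0 * (- real n * c * v$0 + b * (\<Sum>j<n. x j)) = v$0 * (k * v$0)" using r0 by simp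
  with e1 e2 show ?thesis unfolding x_def[symmetric]
    by (simp add: algebra_simps power2_eq_square)
qed

lemma decomp:
  fixes x :: "nat \<Rightarrow> real"
  assumes n: "n > 0"
  and m_def: "m = (\<Sum>j<n. x j) / real n"
  and y_def: "y = (\<lambda>j. x j - m)"
  shows "(\<Sum>j<n. (x j)^2) = real n * m^2 + (\<Sum>j<n. (y j)^2)"
    and "(\<Sum>j<n. x j * x (nx n j)) = real n * m^2 + (\<Sum>j<n. y j * y (nx n j))"
    and "(\<Sum>j<n. (y j + y (nx n j))^2) = 2 * (\<Sum>j<n. (y j)^2) + 2 * (\<Sum>j<n. y j * y (nx n j))"
    and "(\<Sum>j<n. (y j - y (nx n j))^2) = 2 * (\<Sum>j<n. (y j)^2) - 2 * (\<Sum>j<n. y j * y (nx n j))"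
    and "(\<Sum>j<n. x j) = real n * m"
    and "\<And>j. x j = m + y j"
proof -
  show xs: "(\<Sum>j<n. x j) = real n * m" unfolding m_def using n by simp
  have ys: "(\<Sum>j<n. y j) = 0" unfolding y_def sum_subtractf using xs by simp
  have ys2: "(\<Sum>j<n. y (nx n j)) = 0" using sum_nx[OF n, of y] ys by simp
  have yy: "(\<Sum>j<n. (y (nx n j))^2) = (\<Sum>j<n. (y j)^2)" using sum_nx[OF n, of "\<lambda>j. (y j)^2"] by simp
  show xy: "\<And>j. x j = m + y j" unfolding y_def by simp
  have "(\<Sum>j<n. (x j)^2) = (\<Sum>j<n. m^2 + 2 * m * y j + (y j)^2)"
    unfolding xy by (simp add: power2_eq_square algebra_simps)
  also have "\<dots> = real n * m^2 + (\<Sum>j<n. (y j)^2)"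
    by (simp add: sum.distrib sum_distrib_left[symmetric] ys)
  finally show "(\<Sum>j<n. (x j)^2) = real n * m^2 + (\<Sum>j<n. (y j)^2)" .
  have "(\<Sum>j<n. x j * x (nx n j)) = (\<Sum>j<n. m^2 + m * y j + m * y (nx n j) + y j * y (nx n j))"
    unfolding xy by (simp add: power2_eq_square algebra_simps)
  also have "\<dots> = real n * m^2 + (\<Sum>j<n. y j * y (nx n j))"
    by (simp add: sum.distrib sum_distrib_left[symmetric] ys ys2)
  finally show "(\<Sum>j<n. x j * x (nx n j)) = real n * m^2 + (\<Sum>j<n. y j * y (nx n j))" .
  have "(\<Sum>j<n. (y j + y (nx n j))^2) = (\<Sum>j<n. (y j)^2 + 2 * (y j * y (nx n j)) + (y (nx n j))^2)"
    by (simp add: power2_eq_square algebra_simps)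
  also have "\<dots> = 2 * (\<Sum>j<n. (y j)^2) + 2 * (\<Sum>j<n. y j * y (nx n j))"
    by (simp add: sum.distrib sum_distrib_left[symmetric] yy)
  finally show "(\<Sum>j<n. (y j + y (nx n j))^2) = 2 * (\<Sum>j<n. (y j)^2) + 2 * (\<Sum>j<n. y j * y (nx n j))" .
  have "(\<Sum>j<n. (y j - y (nx n j))^2) = (\<Sum>j<n. (y j)^2 - 2 * (y j * y (nx n j)) + (y (nx n j))^2)"
    by (simp add: power2_eq_square algebra_simps)
  also have "\<dots> = 2 * (\<Sum>j<n. (y j)^2) - 2 * (\<Sum>j<n. y j * y (nx n j))"
    by (simp add: sum.distrib sum_subtractf sum_distrib_left[symmetric] yy)
  finally show "(\<Sum>j<n. (y j - y (nx n j))^2) = 2 * (\<Sum>j<n. (y j)^2) - 2 * (\<Sum>j<n. y j * y (nx n j))" .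
qed

lemma sq_sum_zero:
  fixes y :: "nat \<Rightarrow> real"
  assumes "(\<Sum>j<n. (y j)^2) = 0" "j < n"
  shows "y j = 0"
proof -
  have "\<forall>j\<in>{..<n}. (y j)^2 = 0" using assms(1) by (subst sum_nonneg_eq_0_iff[symmetric]) auto
  thus ?thesis using assms(2) by auto
qed

lemma case_low:
  fixes n :: nat and a b k :: real
  assumes n: "n \<ge> 3" and a: "a > -1/4" and b: "b = 1 \<or> b = -1"
    and v: "v \<in> carrier_vec (n+1)" and ev: "mmat n a b (c_low n a) *\<^sub>v v = k \<cdot>\<^sub>v v"
  shows "(l_low n a - k) * ((v$0)^2 + (\<Sum>j<n. (v$Suc j)^2)) \<ge> 0"
    and "k = l_low n a \<Longrightarrow> v = ((\<Sum>j<n. v$Suc j)/real n) \<cdot>\<^sub>v vec (n+1) (\<lambda>i. if i = 0 then b else 1)"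
proof -
  define c where "c = c_low n a"
  define l where "l = l_low n a"
  define x where "x j = v$Suc j" for j
  define m where "m = (\<Sum>j<n. x j) / real n"
  define y where "y = (\<lambda>j. x j - m)"
  define Y where "Y = (\<Sum>j<n. (y j)^2)"
  define Z where "Z = (\<Sum>j<n. y j * y (nx n j))"
  have n0: "n > 0" using n by auto
  note D0 = decomp[OF n0 m_def y_def]
  have D: "(\<Sum>j<n. (x j)^2) = real n * m^2 + Y"
    "(\<Sum>j<n. x j * x (nx n j)) = real n * m^2 + Z"
    "(\<Sum>j<n. (y j + y (nx n j))^2) = 2 * Y + 2 * Z"
    "(\<Sum>j<n. (y j - y (nx n j))^2) = 2 * Y - 2 * Z"
    "(\<Sum>j<n. x j) = real n * m"
    using D0(1-5) unfolding Y_def Z_def by auto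
  have E: "k * ((v$0)^2 + (\<Sum>j<n. (x j)^2)) = - real n * c * (v$0)^2 + 2 * b * v$0 * (\<Sum>j<n. x j)
     + c * (\<Sum>j<n. (x j)^2) + 2 * a * (\<Sum>j<n. x j * x (nx n j))"
    using eig_form[OF v ev[folded c_def] n] unfolding x_def .
  have Y0: "Y \<ge> 0" unfolding Y_def by (auto intro: sum_nonneg)
  have "(\<Sum>j<n. (y j + y (nx n j))^2) \<ge> 0" by (intro sum_nonneg) auto
  hence YZ1: "2 * Y + 2 * Z \<ge> 0" using D(3) by linarith
  have "(\<Sum>j<n. (y j - y (nx n j))^2) \<ge> 0" by (intro sum_nonneg) auto
  hence YZ2: "2 * Y - 2 * Z \<ge> 0" using D(4) by linarith
  have nr: "real n + 1 \<noteq> 0" by (simp add: add_nonneg_eq_0_iff)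
  have hc1: "l + real n * c = real n" unfolding l_def c_def l_low_def c_low_def using nr
    by (simp add: divide_simps) (simp add: algebra_simps)
  have hc2: "l - c = 2 * a + 1" unfolding l_def c_def l_low_def c_low_def using nr
    by (simp add: divide_simps) (simp add: algebra_simps)
  have b2: "b^2 = 1" using b by auto
  have G: "(l - k) * ((v$0)^2 + (\<Sum>j<n. (x j)^2)) = real n * (v$0 - b * m)^2 + (Y + 2 * a * (Y - Z))"
  proof -
    have "(l - k) * ((v$0)^2 + (\<Sum>j<n. (x j)^2)) = (l + real n * c) * (v$0)^2 - 2 * b * v$0 * (\<Sum>j<n. x j)
       + (l - c) * (\<Sum>j<n. (x j)^2) - 2 * a * (\<Sum>j<n. x j * x (nx n j))"
      using E by (simp add: algebra_simps)
    also have "\<dots> = real n * (v$0)^2 - 2 * b * v$0 * (real n * m) + (2 * a + 1) * (real n * m^2 + Y)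
       - 2 * a * (real n * m^2 + Z)"
      unfolding hc1 hc2 D(1) D(2) D(5) ..
    also have "\<dots> = real n * (v$0 - b * m)^2 + (Y + 2 * a * (Y - Z))"
      using b2 by (simp add: power2_eq_square algebra_simps)
    finally show ?thesis .
  qed
  define \<epsilon> where "\<epsilon> = min 1 (1 + 4 * a)"
  have eps: "\<epsilon> > 0" unfolding \<epsilon>_def using a by auto
  have W: "Y + 2 * a * (Y - Z) \<ge> \<epsilon> * Y"
  proof (cases "a \<ge> 0")
    case True
    hence "2 * a * (Y - Z) \<ge> 0" using YZ2 by auto
    moreover have "\<epsilon> * Y \<le> 1 * Y" unfolding \<epsilon>_def using Y0 by (intro mult_right_mono) auto
    ultimately show ?thesis by linarith
  next
    case False
    hence "2 * a * (Y - Z) \<ge> 2 * a * (2 * Y)" using YZ1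
      by (intro mult_left_mono_neg) auto
    moreover have "\<epsilon> * Y \<le> (1 + 4 * a) * Y" unfolding \<epsilon>_def using Y0 by (intro mult_right_mono) auto
    ultimately show ?thesis by (simp add: algebra_simps)
  qed
  have sq: "real n * (v$0 - b * m)^2 \<ge> 0" by simp
  show "(l_low n a - k) * ((v$0)^2 + (\<Sum>j<n. (v$Suc j)^2)) \<ge> 0"
  proof -
    have "\<epsilon> * Y \<ge> 0" using eps Y0 by simp
    hence "(l - k) * ((v$0)^2 + (\<Sum>j<n. (x j)^2)) \<ge> 0" unfolding G using W sq by linarith
    thus ?thesis unfolding x_def l_def .
  qed
  assume kl: "k = l_low n a"
  hence "real n * (v$0 - b * m)^2 + (Y + 2 * a * (Y - Z)) = 0" using G unfolding l_def by simp
  moreover have "\<epsilon> * Y \<ge> 0" using eps Y0 by simp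
  ultimately have z1: "real n * (v$0 - b * m)^2 = 0" and z2: "\<epsilon> * Y = 0" using sq W by linarith+
  from z1 n0 have v0: "v$0 = b * m" by simp
  from z2 eps have "Y = 0" by simp
  hence yj: "y j = 0" if "j < n" for j using sq_sum_zero[of y n j] that unfolding Y_def by simp
  show "v = ((\<Sum>j<n. v$Suc j)/real n) \<cdot>\<^sub>v vec (n+1) (\<lambda>i. if i = 0 then b else 1)"
  proof (rule eq_vecI)
    show "dim_vec v = dim_vec (((\<Sum>j<n. v$Suc j)/real n) \<cdot>\<^sub>v vec (n+1) (\<lambda>i. if i = 0 then b else 1))"
      using v by simp
    fix i assume "i < dim_vec (((\<Sum>j<n. v$Suc j)/real n) \<cdot>\<^sub>v vec (n+1) (\<lambda>i. if i = 0 then b else 1))"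
    hence i: "i < n + 1" by simp
    show "v $ i = (((\<Sum>j<n. v$Suc j)/real n) \<cdot>\<^sub>v vec (n+1) (\<lambda>i. if i = 0 then b else 1)) $ i"
    proof (cases i)
      case 0
      then show ?thesis using v0 unfolding m_def x_def by simp
    next
      case (Suc j)
      hence "j < n" using i by simp
      hence "x j = m" using yj[of j] unfolding y_def by simp
      then show ?thesis using Suc i unfolding m_def x_def by simp
    qed
  qed
qed

lemma case_upp:
  fixes n :: nat and a b k :: real
  assumes n: "n \<ge> 3" and a: "a < 1/4" and b: "b = 1 \<or> b = -1"
    and v: "v \<in> carrier_vec (n+1)" and ev: "mmat n a b (c_upp n a) *\<^sub>v v = k \<cdot>\<^sub>v v"
  shows "(k - l_upp n a) * ((v$0)^2 + (\<Sum>j<n. (v$Suc j)^2)) \<ge> 0"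
    and "k = l_upp n a \<Longrightarrow> v = ((\<Sum>j<n. v$Suc j)/real n) \<cdot>\<^sub>v vec (n+1) (\<lambda>i. if i = 0 then -b else 1)"
proof -
  define c where "c = c_upp n a"
  define l where "l = l_upp n a"
  define x where "x j = v$Suc j" for j
  define m where "m = (\<Sum>j<n. x j) / real n"
  define y where "y = (\<lambda>j. x j - m)"
  define Y where "Y = (\<Sum>j<n. (y j)^2)"
  define Z where "Z = (\<Sum>j<n. y j * y (nx n j))"
  have n0: "n > 0" using n by auto
  note D0 = decomp[OF n0 m_def y_def]
  have D: "(\<Sum>j<n. (x j)^2) = real n * m^2 + Y"
    "(\<Sum>j<n. x j * x (nx n j)) = real n * m^2 + Z"
    "(\<Sum>j<n. (y j + y (nx n j))^2) = 2 * Y + 2 * Z"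
    "(\<Sum>j<n. (y j - y (nx n j))^2) = 2 * Y - 2 * Z"
    "(\<Sum>j<n. x j) = real n * m"
    using D0(1-5) unfolding Y_def Z_def by auto
  have E: "k * ((v$0)^2 + (\<Sum>j<n. (x j)^2)) = - real n * c * (v$0)^2 + 2 * b * v$0 * (\<Sum>j<n. x j)
     + c * (\<Sum>j<n. (x j)^2) + 2 * a * (\<Sum>j<n. x j * x (nx n j))"
    using eig_form[OF v ev[folded c_def] n] unfolding x_def .
  have Y0: "Y \<ge> 0" unfolding Y_def by (auto intro: sum_nonneg)
  have "(\<Sum>j<n. (y j + y (nx n j))^2) \<ge> 0" by (intro sum_nonneg) auto
  hence YZ1: "2 * Y + 2 * Z \<ge> 0" using D(3) by linarith
  have "(\<Sum>j<n. (y j - y (nx n j))^2) \<ge> 0" by (intro sum_nonneg) auto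
  hence YZ2: "2 * Y - 2 * Z \<ge> 0" using D(4) by linarith
  have nr: "real n + 1 \<noteq> 0" by (simp add: add_nonneg_eq_0_iff)
  have hc1: "l + real n * c = - real n" unfolding l_def c_def l_upp_def c_upp_def using nr
    by (simp add: divide_simps) (simp add: algebra_simps)
  have hc2: "c - l = 1 - 2 * a" unfolding l_def c_def l_upp_def c_upp_def using nr
    by (simp add: divide_simps) (simp add: algebra_simps)
  have b2: "b^2 = 1" using b by auto
  have G: "(k - l) * ((v$0)^2 + (\<Sum>j<n. (x j)^2)) = real n * (v$0 + b * m)^2 + (Y - 2 * a * (Y - Z))"
  proof -
    have "(k - l) * ((v$0)^2 + (\<Sum>j<n. (x j)^2)) = - (l + real n * c) * (v$0)^2 + 2 * b * v$0 * (\<Sum>j<n. x j)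
       + (c - l) * (\<Sum>j<n. (x j)^2) + 2 * a * (\<Sum>j<n. x j * x (nx n j))"
      using E by (simp add: algebra_simps)
    also have "\<dots> = real n * (v$0)^2 + 2 * b * v$0 * (real n * m) + (1 - 2 * a) * (real n * m^2 + Y)
       + 2 * a * (real n * m^2 + Z)"
      unfolding hc1 hc2 D(1) D(2) D(5) by simp
    also have "\<dots> = real n * (v$0 + b * m)^2 + (Y - 2 * a * (Y - Z))"
      using b2 by (simp add: power2_eq_square algebra_simps)
    finally show ?thesis .
  qed
  define \<epsilon> where "\<epsilon> = min 1 (1 - 4 * a)"
  have eps: "\<epsilon> > 0" unfolding \<epsilon>_def using a by auto
  have W: "Y - 2 * a * (Y - Z) \<ge> \<epsilon> * Y"
  proof (cases "a \<le> 0")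
    case True
    have h1: "- 2 * a \<ge> 0" using True by linarith
    have h2: "Y - Z \<ge> 0" using YZ2 by linarith
    have "(- 2 * a) * (Y - Z) \<ge> 0" using mult_nonneg_nonneg[OF h1 h2] .
    moreover have "\<epsilon> * Y \<le> 1 * Y" unfolding \<epsilon>_def using Y0 by (intro mult_right_mono) auto
    ultimately show ?thesis by linarith
  next
    case False
    hence "(- 2 * a) * (Y - Z) \<ge> (- 2 * a) * (2 * Y)" using YZ1
      by (intro mult_left_mono_neg) auto
    moreover have "\<epsilon> * Y \<le> (1 - 4 * a) * Y" unfolding \<epsilon>_def using Y0 by (intro mult_right_mono) auto
    ultimately show ?thesis by (simp add: algebra_simps)
  qed
  have sq: "real n * (v$0 + b * m)^2 \<ge> 0" by simp
  show "(k - l_upp n a) * ((v$0)^2 + (\<Sum>j<n. (v$Suc j)^2)) \<ge> 0"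
  proof -
    have "\<epsilon> * Y \<ge> 0" using eps Y0 by simp
    hence "(k - l) * ((v$0)^2 + (\<Sum>j<n. (x j)^2)) \<ge> 0" unfolding G using W sq by linarith
    thus ?thesis unfolding x_def l_def .
  qed
  assume kl: "k = l_upp n a"
  hence "real n * (v$0 + b * m)^2 + (Y - 2 * a * (Y - Z)) = 0" using G unfolding l_def by simp
  moreover have "\<epsilon> * Y \<ge> 0" using eps Y0 by simp
  ultimately have z1: "real n * (v$0 + b * m)^2 = 0" and z2: "\<epsilon> * Y = 0" using sq W by linarith+
  from z1 n0 have v0: "v$0 = - b * m" by simp
  from z2 eps have "Y = 0" by simp
  hence yj: "y j = 0" if "j < n" for j using sq_sum_zero[of y n j] that unfolding Y_def by simp
  show "v = ((\<Sum>j<n. v$Suc j)/real n) \<cdot>\<^sub>v vec (n+1) (\<lambda>i. if i = 0 then -b else 1)"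
  proof (rule eq_vecI)
    show "dim_vec v = dim_vec (((\<Sum>j<n. v$Suc j)/real n) \<cdot>\<^sub>v vec (n+1) (\<lambda>i. if i = 0 then -b else 1))"
      using v by simp
    fix i assume "i < dim_vec (((\<Sum>j<n. v$Suc j)/real n) \<cdot>\<^sub>v vec (n+1) (\<lambda>i. if i = 0 then -b else 1))"
    hence i: "i < n + 1" by simp
    show "v $ i = (((\<Sum>j<n. v$Suc j)/real n) \<cdot>\<^sub>v vec (n+1) (\<lambda>i. if i = 0 then -b else 1)) $ i"
    proof (cases i)
      case 0
      then show ?thesis using v0 unfolding m_def x_def by simp
    next
      case (Suc j)
      hence "j < n" using i by simp
      hence "x j = m" using yj[of j] unfolding y_def by simp
      then show ?thesis using Suc i unfolding m_def x_def by simp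
    qed
  qed
qed

lemma trans_core:
  fixes n :: nat and a b k :: real
  assumes n: "n \<ge> 3" and a: "a \<noteq> 0" and b: "b = 1 \<or> b = -1"
    and v: "v \<in> carrier_vec (n+1)" and ev: "mmat n a b (c_trans n a) *\<^sub>v v = k \<cdot>\<^sub>v v"
  shows "(l_trans n a - k) * ((v$0)^2 + (\<Sum>j<n. (v$Suc j)^2))
     = (- real n / (4 * a)) * (v$0 + 4 * a * b * ((\<Sum>j<n. v$Suc j)/real n))^2
       - a * (\<Sum>j<n. (v$Suc j + v$Suc (nx n j) - 2 * ((\<Sum>j<n. v$Suc j)/real n))^2)"
proof -
  define c where "c = c_trans n a"
  define l where "l = l_trans n a"
  define x where "x j = v$Suc j" for j
  define m where "m = (\<Sum>j<n. x j) / real n"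
  define y where "y = (\<lambda>j. x j - m)"
  define Y where "Y = (\<Sum>j<n. (y j)^2)"
  define Z where "Z = (\<Sum>j<n. y j * y (nx n j))"
  have n0: "n > 0" using n by auto
  note D0 = decomp[OF n0 m_def y_def]
  have D: "(\<Sum>j<n. (x j)^2) = real n * m^2 + Y"
    "(\<Sum>j<n. x j * x (nx n j)) = real n * m^2 + Z"
    "(\<Sum>j<n. (y j + y (nx n j))^2) = 2 * Y + 2 * Z"
    "(\<Sum>j<n. x j) = real n * m"
    using D0(1-3,5) unfolding Y_def Z_def by auto
  have E: "k * ((v$0)^2 + (\<Sum>j<n. (x j)^2)) = - real n * c * (v$0)^2 + 2 * b * v$0 * (\<Sum>j<n. x j)
     + c * (\<Sum>j<n. (x j)^2) + 2 * a * (\<Sum>j<n. x j * x (nx n j))"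
    using eig_form[OF v ev[folded c_def] n] unfolding x_def .
  have nr: "real n + 1 \<noteq> 0" by (simp add: add_nonneg_eq_0_iff)
  define p where "p = - real n / (4 * a)"
  have hp: "p * (4 * a) = - real n" unfolding p_def using a by simp
  have hc1: "l + real n * c = p" unfolding p_def l_def c_def l_trans_def c_trans_def using nr a
    by (simp add: divide_simps) (simp add: algebra_simps power2_eq_square)
  have hc2: "l - c = - 2 * a" unfolding l_def c_def l_trans_def c_trans_def using nr a
    by (simp add: divide_simps) (simp add: algebra_simps power2_eq_square)
  have b2: "b * b = 1" using b by auto
  have "(l - k) * ((v$0)^2 + (\<Sum>j<n. (x j)^2)) = (l + real n * c) * (v$0)^2 - 2 * b * v$0 * (\<Sum>j<n. x j)
       + (l - c) * (\<Sum>j<n. (x j)^2) - 2 * a * (\<Sum>j<n. x j * x (nx n j))"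
    using E by (simp add: algebra_simps)
  also have "\<dots> = p * (v$0)^2 - 2 * b * v$0 * (real n * m) - 2 * a * (real n * m^2 + Y)
       - 2 * a * (real n * m^2 + Z)"
    unfolding hc1 hc2 D(1) D(2) D(4) by simp
  also have "\<dots> = p * (v$0)^2 + 2 * b * v$0 * m * (p * (4 * a)) + 4 * a * m^2 * (b * b) * (p * (4 * a)) - a * (2 * Y + 2 * Z)"
    unfolding hp b2 by (simp add: algebra_simps power2_eq_square)
  also have "\<dots> = p * (v$0 + 4 * a * b * m)^2 - a * (\<Sum>j<n. (y j + y (nx n j))^2)"
    unfolding D(3) by (simp add: algebra_simps power2_eq_square)
  finally have "(l - k) * ((v$0)^2 + (\<Sum>j<n. (x j)^2)) = p * (v$0 + 4 * a * b * m)^2 - a * (\<Sum>j<n. (y j + y (nx n j))^2)" .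
  moreover have "y j + y (nx n j) = x j + x (nx n j) - 2 * m" for j unfolding y_def by simp
  ultimately show ?thesis unfolding l_def p_def m_def x_def by simp
qed

lemma alt_y:
  fixes y :: "nat \<Rightarrow> real"
  assumes h: "\<And>j. j < n \<Longrightarrow> y j + y (nx n j) = 0"
  shows "j < n \<Longrightarrow> y j = (-1)^j * y 0"
proof (induction j)
  case 0
  then show ?case by simp
next
  case (Suc j)
  have "nx n j = Suc j" unfolding nx_def using Suc.prems by simp
  hence "y (Suc j) = - y j" using h[of j] Suc.prems by simp
  then show ?case using Suc by simp
qed

lemma trans_struct:
  fixes n :: nat and a b m :: real
  assumes v: "v \<in> carrier_vec (n+1)" and v0: "v$0 = - 4 * a * b * m"
    and h: "\<And>j. j < n \<Longrightarrow> v$Suc j + v$Suc (nx n j) - 2 * m = 0"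
  shows "v = m \<cdot>\<^sub>v vec (n+1) (\<lambda>i. if i = 0 then - 4 * a * b else 1)
           + (v$1 - m) \<cdot>\<^sub>v vec (n+1) (\<lambda>i. if i = 0 then 0 else (-1)^(i-1))"
proof -
  define y where "y j = v$Suc j - m" for j
  have yj: "y j = (-1)^j * y 0" if "j < n" for j
    by (rule alt_y[OF _ that]) (use h in \<open>auto simp: y_def\<close>)
  show ?thesis
  proof (rule eq_vecI)
    fix i assume "i < dim_vec (m \<cdot>\<^sub>v vec (n+1) (\<lambda>i. if i = 0 then - 4 * a * b else 1)
           + (v$1 - m) \<cdot>\<^sub>v vec (n+1) (\<lambda>i. if i = 0 then 0 else (-1)^(i-1)))"
    hence i: "i < n + 1" by simp
    show "v $ i = (m \<cdot>\<^sub>v vec (n+1) (\<lambda>i. if i = 0 then - 4 * a * b else 1)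
           + (v$1 - m) \<cdot>\<^sub>v vec (n+1) (\<lambda>i. if i = 0 then 0 else (-1)^(i-1))) $ i"
    proof (cases i)
      case 0
      then show ?thesis using v0 by simp
    next
      case (Suc j)
      hence j: "j < n" using i by simp
      have "v $ Suc j = m + (-1)^j * (v$1 - m)" using yj[OF j] unfolding y_def by simp
      then show ?thesis using Suc i by (simp add: algebra_simps)
    qed
  qed (use v in simp)
qed

lemma ev_quad:
  fixes n :: nat and a b c \<mu> :: real
  assumes n: "n \<ge> 3" and b: "b = 1 \<or> b = -1" and q: "(\<mu> + real n * c) * (\<mu> - c - 2 * a) = real n"
  shows "mmat n a b c *\<^sub>v vec (n+1) (\<lambda>i. if i = 0 then b * (\<mu> - c - 2 * a) else 1)
       = \<mu> \<cdot>\<^sub>v vec (n+1) (\<lambda>i. if i = 0 then b * (\<mu> - c - 2 * a) else 1)"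
    (is "?M *\<^sub>v ?w = _")
proof -
  have w: "?w \<in> carrier_vec (n+1)" by simp
  have b2: "b * b = 1" using b by auto
  show ?thesis
  proof (rule eq_vecI)
    fix i assume "i < dim_vec (\<mu> \<cdot>\<^sub>v ?w)"
    hence i: "i < n + 1" by simp
    show "(?M *\<^sub>v ?w) $ i = (\<mu> \<cdot>\<^sub>v ?w) $ i"
    proof (cases i)
      case 0
      have "(?M *\<^sub>v ?w) $ 0 = - real n * c * (b * (\<mu> - c - 2 * a)) + b * real n"
        using mmat_row0[OF w, of a b c] by simp
      also have "\<dots> = b * (real n - real n * c * (\<mu> - c - 2 * a))" by (simp add: algebra_simps)
      also have "real n - real n * c * (\<mu> - c - 2 * a) = \<mu> * (\<mu> - c - 2 * a)"
        using q by (simp add: algebra_simps)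
      finally show ?thesis using 0 by simp
    next
      case (Suc j)
      hence j: "j < n" using i by simp
      have lt: "nx n j < n" "pv n j < n" using n by (auto simp: nx_lt pv_lt)
      have "(?M *\<^sub>v ?w) $ Suc j = b * (b * (\<mu> - c - 2 * a)) + c + a + a"
        using mmat_rowS[OF w j n, of a b c] j lt by simp
      also have "\<dots> = \<mu>"
      proof -
        have e: "b * (b * (\<mu> - c - 2 * a)) = \<mu> - c - 2 * a" using b2 by (metis mult.assoc mult_1)
        show ?thesis unfolding e by simp
      qed
      finally show ?thesis using Suc j by simp
    qed
  qed (simp add: mmat_def)
qed

lemma ev_alt:
  fixes n :: nat and a b c :: real
  assumes n: "n \<ge> 3" and ev: "even n"
  shows "mmat n a b c *\<^sub>v vec (n+1) (\<lambda>i. if i = 0 then 0 else (-1)^(i-1))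
       = (c - 2 * a) \<cdot>\<^sub>v vec (n+1) (\<lambda>i. if i = 0 then 0 else (-1::real)^(i-1))"
    (is "?M *\<^sub>v ?w = _")
proof -
  have w: "?w \<in> carrier_vec (n+1)" by simp
  have sum0: "(\<Sum>j<n. (-1::real)^j) = 0"
  proof -
    obtain h where h: "n = 2 * h" using ev by auto
    have "(\<Sum>j<2*h. (-1::real)^j) = 0" by (induction h) auto
    thus ?thesis using h by simp
  qed
  have nxs: "(-1::real)^(nx n j) = - ((-1)^j)" if "j < n" for j
  proof (cases "j + 1 < n")
    case True
    then show ?thesis unfolding nx_def by simp
  next
    case False
    hence "j + 1 = n" using that by simp
    hence "odd j" using ev by auto
    then show ?thesis unfolding nx_def using \<open>j + 1 = n\<close> by simp
  qed
  have pvs: "(-1::real)^(pv n j) = - ((-1)^j)" if "j < n" for j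
  proof -
    have "pv n j < n" using n by (simp add: pv_lt)
    from nxs[OF this] have "(-1::real)^(nx n (pv n j)) = - ((-1)^(pv n j))" .
    moreover have "nx n (pv n j) = j" using nx_pv[of "pv n j" n j] that \<open>pv n j < n\<close> by auto
    ultimately show ?thesis by simp
  qed
  show ?thesis
  proof (rule eq_vecI)
    fix i assume "i < dim_vec ((c - 2 * a) \<cdot>\<^sub>v ?w)"
    hence i: "i < n + 1" by simp
    show "(?M *\<^sub>v ?w) $ i = ((c - 2 * a) \<cdot>\<^sub>v ?w) $ i"
    proof (cases i)
      case 0
      have "(?M *\<^sub>v ?w) $ 0 = b * (\<Sum>j<n. (-1::real)^j)"
        using mmat_row0[OF w, of a b c] by simp
      then show ?thesis using 0 sum0 by simp
    next
      case (Suc j)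
      hence j: "j < n" using i by simp
      have lt: "nx n j < n" "pv n j < n" using n by (auto simp: nx_lt pv_lt)
      have "(?M *\<^sub>v ?w) $ Suc j = c * (-1)^j + a * (-1)^(nx n j) + a * (-1)^(pv n j)"
        using mmat_rowS[OF w j n, of a b c] j lt by simp
      also have "\<dots> = (c - 2 * a) * (-1)^j" using nxs[OF j] pvs[OF j] by (simp add: algebra_simps)
      finally show ?thesis using Suc j by simp
    qed
  qed (simp add: mmat_def)
qed

lemma smult_one_mult: fixes v :: "real vec" assumes v: "v \<in> carrier_vec N"
 shows  "((- l) \<cdot>\<^sub>m 1\<^sub>m N) *\<^sub>v v = (- l) \<cdot>\<^sub>v v"
proof (rule eq_vecI)
  fix i assume i: "i < dim_vec ((- l) \<cdot>\<^sub>v v)"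
  hence iN: "i < N" using v by simp
  have "(((- l) \<cdot>\<^sub>m 1\<^sub>m N) *\<^sub>v v) $ i = (\<Sum>j\<in>{0..<N}. ((- l) \<cdot>\<^sub>m 1\<^sub>m N) $$ (i,j) * v $ j)"
    using iN v by (auto simp: scalar_prod_def intro!: sum.cong)
  also have "\<dots> = (\<Sum>j\<in>{0..<N}. if j = i then - l * v $ i else 0)"
    by (rule sum.cong) (use iN in auto)
  also have "\<dots> = - l * v $ i" using iN by simp
  finally show "(((- l) \<cdot>\<^sub>m 1\<^sub>m N) *\<^sub>v v) $ i = ((- l) \<cdot>\<^sub>v v) $ i" using iN v by simp
qed (use v in simp)

lemma char_ker:
  fixes M :: "real mat"
  assumes M: "M \<in> carrier_mat N N" and v: "v \<in> carrier_vec N"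
  shows "char_matrix M l *\<^sub>v v = 0\<^sub>v N \<longleftrightarrow> M *\<^sub>v v = l \<cdot>\<^sub>v v"
proof -
  have e: "((- l) \<cdot>\<^sub>m 1\<^sub>m N) *\<^sub>v v = (- l) \<cdot>\<^sub>v v" by (rule smult_one_mult[OF v])
  have "char_matrix M l *\<^sub>v v = M *\<^sub>v v + (- l) \<cdot>\<^sub>v v"
    unfolding char_matrix_def using M v
    by (simp add: add_mult_distrib_mat_vec[OF M _ v] e)
  also have "\<dots> = 0\<^sub>v N \<longleftrightarrow> M *\<^sub>v v = l \<cdot>\<^sub>v v"
  proof
    assume h: "M *\<^sub>v v + (- l) \<cdot>\<^sub>v v = 0\<^sub>v N"
    show "M *\<^sub>v v = l \<cdot>\<^sub>v v"
    proof (rule eq_vecI)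
      fix i assume i: "i < dim_vec (l \<cdot>\<^sub>v v)"
      have "(M *\<^sub>v v + (- l) \<cdot>\<^sub>v v) $ i = 0" using h i v by simp
      thus "(M *\<^sub>v v) $ i = (l \<cdot>\<^sub>v v) $ i" using i v M by simp
    qed (use M v in simp)
  next
    assume h: "M *\<^sub>v v = l \<cdot>\<^sub>v v"
    show "M *\<^sub>v v + (- l) \<cdot>\<^sub>v v = 0\<^sub>v N" unfolding h using v by (intro eq_vecI) auto
  qed
  finally show ?thesis .
qed

lemma eig_mult_kernel:
  "eig_mult (mmat n a b c) l = kernel_dim (char_matrix (mmat n a b c) l)"
  unfolding eig_mult_def
  by (rule real_sym_order_kernel[OF mmat_carrier]) (auto intro: mmat_sym)

lemma ev_finite: "finite {k. eigenvalue (mmat n a b c) k}"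
proof -
  have M: "mmat n a b c \<in> carrier_mat (n+1) (n+1)" by (rule mmat_carrier)
  have "char_poly (mmat n a b c) \<noteq> 0"
    using degree_monic_char_poly[OF M] by auto
  hence "finite {k. poly (char_poly (mmat n a b c)) k = 0}" by (rule poly_roots_finite)
  thus ?thesis using eigenvalue_root_char_poly[OF M] by simp
qed

lemma lam_max_eq:
  assumes "eigenvalue (mmat n a b c) l" "\<And>k. eigenvalue (mmat n a b c) k \<Longrightarrow> k \<le> l"
  shows "lam_max n a b c = l"
  unfolding lam_max_def using assms ev_finite by (intro Max_eqI) auto

lemma lam_max_ge:
  assumes "eigenvalue (mmat n a b c) l"
  shows "l \<le> lam_max n a b c"
  unfolding lam_max_def using assms ev_finite by (intro Max_ge) auto

lemma lam_min_eq:
  assumes "eigenvalue (mmat n a b c) l" "\<And>k. eigenvalue (mmat n a b c) k \<Longrightarrow> l \<le> k"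
  shows "lam_min n a b c = l"
  unfolding lam_min_def using assms ev_finite by (intro Min_eqI) auto

lemma lam_min_le:
  assumes "eigenvalue (mmat n a b c) l"
  shows "lam_min n a b c \<le> l"
  unfolding lam_min_def using assms ev_finite by (intro Min_le) auto

lemma norm_pos:
  fixes v :: "real vec"
  assumes v: "v \<in> carrier_vec (n+1)" and nz: "v \<noteq> 0\<^sub>v (n+1)"
  shows "(v$0)^2 + (\<Sum>j<n. (v$Suc j)^2) > 0"
proof -
  obtain i where i: "i < n + 1" "v $ i \<noteq> 0" using nz v by (metis eq_vecI carrier_vecD index_zero_vec)
  have nn: "(\<Sum>j<n. (v$Suc j)^2) \<ge> 0" by (intro sum_nonneg) auto
  show ?thesis
  proof (cases i)
    case 0
    then show ?thesis using i nn by (simp add: add_pos_nonneg)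
  next
    case (Suc j)
    hence "(v$Suc j)^2 \<le> (\<Sum>j<n. (v$Suc j)^2)" using i by (intro member_le_sum) auto
    moreover have "(v$Suc j)^2 > 0" using i Suc by simp
    moreover have "(v$0)^2 \<ge> 0" by simp
    ultimately show ?thesis by linarith
  qed
qed

lemma eigenvalueI:
  assumes "mmat n a b c *\<^sub>v w = \<mu> \<cdot>\<^sub>v w" "w \<in> carrier_vec (n+1)" "w $ 1 = 1" "n > 0"
  shows "eigenvalue (mmat n a b c) \<mu>"
proof -
  have "w \<noteq> 0\<^sub>v (n+1)"
  proof
    assume "w = 0\<^sub>v (n+1)"
    hence "w $ 1 = 0" using assms(4) by simp
    thus False using assms(3) by simp
  qed
  thus ?thesis unfolding eigenvalue_def eigenvector_def using assms mmat_carrier[of n a b c] by auto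
qed

lemma quad_fact:
  fixes s r \<mu> P :: real
  assumes "r * r = s * s + 4 * P"
  shows "(\<mu> - (s + r) / 2) * (\<mu> - (s - r) / 2) = \<mu> * \<mu> - s * \<mu> - P"
proof -
  have "(\<mu> - (s + r) / 2) * (\<mu> - (s - r) / 2) = (\<mu> * \<mu> - s * \<mu>) + (s * s - r * r) / 4"
    by (simp add: field_simps)
  also have "\<dots> = \<mu> * \<mu> - s * \<mu> - P" unfolding assms by simp
  finally show ?thesis .
qed

lemma quad_roots:
  fixes n :: nat and c a l :: real
  assumes n: "n > 0" and q: "(l + real n * c) * (l - c - 2 * a) \<le> real n"
  shows "\<exists>\<mu>. \<mu> \<ge> l \<and> (\<mu> + real n * c) * (\<mu> - c - 2 * a) = real n"
    and "\<exists>\<mu>. \<mu> \<le> l \<and> (\<mu> + real n * c) * (\<mu> - c - 2 * a) = real n"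
proof -
  define s where "s = c + 2 * a - real n * c"
  define P where "P = real n * c * (c + 2 * a) + real n"
  define D where "D = (c + 2 * a + real n * c)^2 + 4 * real n"
  have D0: "D \<ge> 0" unfolding D_def by (intro add_nonneg_nonneg) auto
  define r where "r = sqrt D"
  have r0: "r \<ge> 0" unfolding r_def using D0 by simp
  have rr: "r * r = s * s + 4 * P"
  proof -
    have "r * r = D" unfolding r_def using D0 by simp
    also have "\<dots> = s * s + 4 * P" unfolding D_def s_def P_def by (simp add: algebra_simps power2_eq_square)
    finally show ?thesis .
  qed
  define mp where "mp = (s + r) / 2"
  define mm where "mm = (s - r) / 2"
  have qp: "(\<mu> + real n * c) * (\<mu> - c - 2 * a) - real n = (\<mu> - mp) * (\<mu> - mm)" for \<mu>
  proof -
    have "(\<mu> - mp) * (\<mu> - mm) = \<mu> * \<mu> - s * \<mu> - P" unfolding mp_def mm_def by (rule quad_fact[OF rr])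
    also have "\<dots> = (\<mu> + real n * c) * (\<mu> - c - 2 * a) - real n" unfolding s_def P_def by (simp add: algebra_simps)
    finally show ?thesis by simp
  qed
  have le: "mm \<le> mp" unfolding mm_def mp_def using r0 by simp
  have pr: "(l - mp) * (l - mm) \<le> 0" using qp[of l] q by simp
  have b1: "mm \<le> l"
  proof (rule ccontr)
    assume "\<not> mm \<le> l"
    hence "l - mp < 0" "l - mm < 0" using le by auto
    hence "(l - mp) * (l - mm) > 0" by (rule mult_neg_neg)
    thus False using pr by simp
  qed
  have b2: "l \<le> mp"
  proof (rule ccontr)
    assume "\<not> l \<le> mp"
    hence "l - mp > 0" "l - mm > 0" using le by auto
    hence "(l - mp) * (l - mm) > 0" by (rule mult_pos_pos)
    thus False using pr by simp
  qed
  show "\<exists>\<mu>. \<mu> \<ge> l \<and> (\<mu> + real n * c) * (\<mu> - c - 2 * a) = real n"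
    using b2 qp[of mp] by (intro exI[of _ mp]) auto
  show "\<exists>\<mu>. \<mu> \<le> l \<and> (\<mu> + real n * c) * (\<mu> - c - 2 * a) = real n"
    using b1 qp[of mm] by (intro exI[of _ mm]) auto
qed

lemma quad_eigen:
  fixes n :: nat and a b c \<mu> :: real
  assumes n: "n \<ge> 3" and b: "b = 1 \<or> b = -1" and q: "(\<mu> + real n * c) * (\<mu> - c - 2 * a) = real n"
  shows "eigenvalue (mmat n a b c) \<mu>"
  by (rule eigenvalueI[OF ev_quad[OF n b q]]) (use n in auto)

lemma char_carrier: "char_matrix (mmat n a b c) l \<in> carrier_mat (n+1) (n+1)"
  unfolding char_matrix_def using mmat_carrier[of n a b c] by auto

lemma evE:
  assumes "eigenvalue (mmat n a b c) k"
  obtains v where "v \<in> carrier_vec (n+1)" "v \<noteq> 0\<^sub>v (n+1)" "mmat n a b c *\<^sub>v v = k \<cdot>\<^sub>v v"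
  using assms mmat_carrier[of n a b c] unfolding eigenvalue_def eigenvector_def by auto

lemma le_from_T:
  fixes d T :: real
  assumes "d * T \<ge> 0" "T > 0"
  shows "d \<ge> 0"
  using assms by (simp add: zero_le_mult_iff)

lemma scal_ev:
  fixes M :: "real mat"
  assumes M: "M \<in> carrier_mat N N" and u: "u \<in> carrier_vec N" and e: "M *\<^sub>v u = l \<cdot>\<^sub>v u"
  shows "M *\<^sub>v (\<alpha> \<cdot>\<^sub>v u) = l \<cdot>\<^sub>v (\<alpha> \<cdot>\<^sub>v u)"
  unfolding mult_mat_vec[OF M u] e by (simp add: smult_smult_assoc mult.commute)

lemma low_part:
  fixes n :: nat and a b :: real
  assumes n: "n \<ge> 3" and b: "b = 1 \<or> b = -1" and a: "a > -1/4"
  shows "lam_max n a b (c_low n a) = l_low n a \<and> (\<forall>c. l_low n a \<le> lam_max n a b c)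
     \<and> eig_mult (mmat n a b (c_low n a)) (l_low n a) = 1"
proof -
  define c0 where "c0 = c_low n a"
  define l where "l = l_low n a"
  define M where "M = mmat n a b c0"
  have nr: "real n + 1 \<noteq> 0" by (simp add: add_nonneg_eq_0_iff)
  have hc1: "l + real n * c0 = real n" unfolding l_def c0_def l_low_def c_low_def using nr
    by (simp add: divide_simps) (simp add: algebra_simps)
  have hc2: "l - c0 - 2 * a = 1" unfolding l_def c0_def l_low_def c_low_def using nr
    by (simp add: divide_simps) (simp add: algebra_simps)
  have q0: "(l + real n * c0) * (l - c0 - 2 * a) = real n" unfolding hc1 hc2 by simp
  have evl: "eigenvalue M l" unfolding M_def by (rule quad_eigen[OF n b q0])
  have le: "k \<le> l" if "eigenvalue M k" for k
  proof -
    from evE[OF that[unfolded M_def]] obtain v where v: "v \<in> carrier_vec (n+1)" "v \<noteq> 0\<^sub>v (n+1)"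
      "mmat n a b c0 *\<^sub>v v = k \<cdot>\<^sub>v v" .
    have "(l - k) * ((v$0)^2 + (\<Sum>j<n. (v$Suc j)^2)) \<ge> 0"
      using case_low(1)[OF n a b v(1) v(3)[unfolded c0_def]] unfolding l_def .
    from le_from_T[OF this norm_pos[OF v(1,2)]] show ?thesis by simp
  qed
  have part1: "lam_max n a b c0 = l" by (rule lam_max_eq[OF evl[unfolded M_def] le[unfolded M_def]])
  have part2: "l \<le> lam_max n a b c" for c
  proof -
    define t where "t = c - c0"
    have "(l + real n * c) * (l - c - 2 * a) = (l + real n * c0 + real n * t) * ((l - c0 - 2 * a) - t)"
      unfolding t_def by (simp add: algebra_simps)
    also have "\<dots> = real n - real n * t^2" unfolding hc1 hc2 by (simp add: algebra_simps power2_eq_square)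
    finally have "(l + real n * c) * (l - c - 2 * a) \<le> real n" by simp
    from quad_roots(1)[OF _ this] n obtain \<mu> where mu: "\<mu> \<ge> l" "(\<mu> + real n * c) * (\<mu> - c - 2 * a) = real n" by auto
    have "eigenvalue (mmat n a b c) \<mu>" by (rule quad_eigen[OF n b mu(2)])
    from lam_max_ge[OF this] mu(1) show ?thesis by simp
  qed
  define u where "u = vec (n+1) (\<lambda>i. if i = 0 then b else (1::real))"
  have u: "u \<in> carrier_vec (n+1)" unfolding u_def by simp
  have u_eq: "u = vec (n+1) (\<lambda>i. if i = 0 then b * (l - c0 - 2 * a) else 1)" unfolding u_def hc2 mult_1_right ..
  have Mu: "M *\<^sub>v u = l \<cdot>\<^sub>v u" unfolding M_def u_eq by (rule ev_quad[OF n b q0])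
  have unz: "u \<noteq> 0\<^sub>v (n+1)"
  proof
    assume "u = 0\<^sub>v (n+1)"
    hence "u $ 1 = 0" using n by simp
    thus False unfolding u_def using n by simp
  qed
  have "kernel_dim (char_matrix M l) = 1"
  proof (rule kernel_dim_1[OF char_carrier[of n a b c0 l, folded M_def] u unz])
    fix v :: "real vec" assume v: "v \<in> carrier_vec (n+1)"
    have "char_matrix M l *\<^sub>v v = 0\<^sub>v (n+1) \<longleftrightarrow> M *\<^sub>v v = l \<cdot>\<^sub>v v"
      unfolding M_def by (rule char_ker[OF mmat_carrier v])
    also have "\<dots> \<longleftrightarrow> (\<exists>\<alpha>. v = \<alpha> \<cdot>\<^sub>v u)"
    proof
      assume "M *\<^sub>v v = l \<cdot>\<^sub>v v"
      from case_low(2)[OF n a b v this[unfolded M_def c0_def]] show "\<exists>\<alpha>. v = \<alpha> \<cdot>\<^sub>v u"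
        unfolding l_def u_def by blast
    next
      assume "\<exists>\<alpha>. v = \<alpha> \<cdot>\<^sub>v u"
      then obtain \<alpha> where "v = \<alpha> \<cdot>\<^sub>v u" by auto
      thus "M *\<^sub>v v = l \<cdot>\<^sub>v v" using scal_ev[OF _ u Mu] mmat_carrier unfolding M_def by blast
    qed
    finally show "char_matrix M l *\<^sub>v v = 0\<^sub>v (n+1) \<longleftrightarrow> (\<exists>\<alpha>. v = \<alpha> \<cdot>\<^sub>v u)" .
  qed
  hence part3: "eig_mult M l = 1" by (simp add: eig_mult_kernel M_def)
  show ?thesis using part1 part2 part3 unfolding M_def c0_def l_def by blast
qed

lemma upp_part:
  fixes n :: nat and a b :: real
  assumes n: "n \<ge> 3" and b: "b = 1 \<or> b = -1" and a: "a < 1/4"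
  shows "lam_min n a b (c_upp n a) = l_upp n a \<and> (\<forall>c. lam_min n a b c \<le> l_upp n a)
     \<and> eig_mult (mmat n a b (c_upp n a)) (l_upp n a) = 1"
proof -
  define c0 where "c0 = c_upp n a"
  define l where "l = l_upp n a"
  define M where "M = mmat n a b c0"
  have nr: "real n + 1 \<noteq> 0" by (simp add: add_nonneg_eq_0_iff)
  have hc1: "l + real n * c0 = - real n" unfolding l_def c0_def l_upp_def c_upp_def using nr
    by (simp add: divide_simps) (simp add: algebra_simps)
  have hc2: "l - c0 - 2 * a = -1" unfolding l_def c0_def l_upp_def c_upp_def using nr
    by (simp add: divide_simps) (simp add: algebra_simps)
  have q0: "(l + real n * c0) * (l - c0 - 2 * a) = real n" unfolding hc1 hc2 by simp
  have evl: "eigenvalue M l" unfolding M_def by (rule quad_eigen[OF n b q0])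
  have le: "l \<le> k" if "eigenvalue M k" for k
  proof -
    from evE[OF that[unfolded M_def]] obtain v where v: "v \<in> carrier_vec (n+1)" "v \<noteq> 0\<^sub>v (n+1)"
      "mmat n a b c0 *\<^sub>v v = k \<cdot>\<^sub>v v" .
    have "(k - l) * ((v$0)^2 + (\<Sum>j<n. (v$Suc j)^2)) \<ge> 0"
      using case_upp(1)[OF n a b v(1) v(3)[unfolded c0_def]] unfolding l_def .
    from le_from_T[OF this norm_pos[OF v(1,2)]] show ?thesis by simp
  qed
  have part1: "lam_min n a b c0 = l" by (rule lam_min_eq[OF evl[unfolded M_def] le[unfolded M_def]])
  have part2: "lam_min n a b c \<le> l" for c
  proof -
    define t where "t = c - c0"
    have "(l + real n * c) * (l - c - 2 * a) = (l + real n * c0 + real n * t) * ((l - c0 - 2 * a) - t)"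
      unfolding t_def by (simp add: algebra_simps)
    also have "\<dots> = real n - real n * t^2" unfolding hc1 hc2 by (simp add: algebra_simps power2_eq_square)
    finally have "(l + real n * c) * (l - c - 2 * a) \<le> real n" by simp
    from quad_roots(2)[OF _ this] n obtain \<mu> where mu: "\<mu> \<le> l" "(\<mu> + real n * c) * (\<mu> - c - 2 * a) = real n" by auto
    have "eigenvalue (mmat n a b c) \<mu>" by (rule quad_eigen[OF n b mu(2)])
    from lam_min_le[OF this] mu(1) show ?thesis by simp
  qed
  define u where "u = vec (n+1) (\<lambda>i. if i = 0 then -b else (1::real))"
  have u: "u \<in> carrier_vec (n+1)" unfolding u_def by simp
  have bm: "b * -1 = - b" by simp
  have u_eq: "u = vec (n+1) (\<lambda>i. if i = 0 then b * (l - c0 - 2 * a) else 1)" unfolding u_def hc2 bm ..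
  have Mu: "M *\<^sub>v u = l \<cdot>\<^sub>v u" unfolding M_def u_eq by (rule ev_quad[OF n b q0])
  have unz: "u \<noteq> 0\<^sub>v (n+1)"
  proof
    assume "u = 0\<^sub>v (n+1)"
    hence "u $ 1 = 0" using n by simp
    thus False unfolding u_def using n by simp
  qed
  have "kernel_dim (char_matrix M l) = 1"
  proof (rule kernel_dim_1[OF char_carrier[of n a b c0 l, folded M_def] u unz])
    fix v :: "real vec" assume v: "v \<in> carrier_vec (n+1)"
    have "char_matrix M l *\<^sub>v v = 0\<^sub>v (n+1) \<longleftrightarrow> M *\<^sub>v v = l \<cdot>\<^sub>v v"
      unfolding M_def by (rule char_ker[OF mmat_carrier v])
    also have "\<dots> \<longleftrightarrow> (\<exists>\<alpha>. v = \<alpha> \<cdot>\<^sub>v u)"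
    proof
      assume "M *\<^sub>v v = l \<cdot>\<^sub>v v"
      from case_upp(2)[OF n a b v this[unfolded M_def c0_def]] show "\<exists>\<alpha>. v = \<alpha> \<cdot>\<^sub>v u"
        unfolding l_def u_def by blast
    next
      assume "\<exists>\<alpha>. v = \<alpha> \<cdot>\<^sub>v u"
      then obtain \<alpha> where "v = \<alpha> \<cdot>\<^sub>v u" by auto
      thus "M *\<^sub>v v = l \<cdot>\<^sub>v v" using scal_ev[OF _ u Mu] mmat_carrier unfolding M_def by blast
    qed
    finally show "char_matrix M l *\<^sub>v v = 0\<^sub>v (n+1) \<longleftrightarrow> (\<exists>\<alpha>. v = \<alpha> \<cdot>\<^sub>v u)" .
  qed
  hence part3: "eig_mult M l = 1" by (simp add: eig_mult_kernel M_def)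
  show ?thesis using part1 part2 part3 unfolding M_def c0_def l_def by blast
qed

lemma trans_consts:
  fixes n :: nat and a :: real
  assumes a: "a \<noteq> 0"
  shows "l_trans n a + real n * c_trans n a = - real n / (4 * a)"
    and "l_trans n a - c_trans n a - 2 * a = - 4 * a"
    and "c_trans n a - 2 * a = l_trans n a"
proof -
  have nr: "real n + 1 \<noteq> 0" by (simp add: add_nonneg_eq_0_iff)
  show "l_trans n a + real n * c_trans n a = - real n / (4 * a)"
    unfolding l_trans_def c_trans_def using nr a
    by (simp add: divide_simps) (simp add: algebra_simps power2_eq_square)
  show h2: "l_trans n a - c_trans n a - 2 * a = - 4 * a"
    unfolding l_trans_def c_trans_def using nr a
    by (simp add: divide_simps) (simp add: algebra_simps power2_eq_square)
  from h2 show "c_trans n a - 2 * a = l_trans n a" by simp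
qed

lemma trans_mult:
  fixes n :: nat and a b :: real
  assumes n: "n \<ge> 3" and ev: "even n" and b: "b = 1 \<or> b = -1" and a: "a \<noteq> 0"
  shows "eig_mult (mmat n a b (c_trans n a)) (l_trans n a) = 2"
proof -
  define c0 where "c0 = c_trans n a"
  define l where "l = l_trans n a"
  define M where "M = mmat n a b c0"
  define p where "p = - real n / (4 * a)"
  note tc = trans_consts[OF a, of n, folded c0_def l_def p_def]
  have q0: "(l + real n * c0) * (l - c0 - 2 * a) = real n" unfolding tc(1) tc(2) p_def using a by simp
  define u1 where "u1 = vec (n+1) (\<lambda>i. if i = 0 then - 4 * a * b else (1::real))"
  define u2 where "u2 = vec (n+1) (\<lambda>i. if i = 0 then 0 else (-1::real)^(i-1))"
  have u1: "u1 \<in> carrier_vec (n+1)" unfolding u1_def by simp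
  have u2: "u2 \<in> carrier_vec (n+1)" unfolding u2_def by simp
  have bm: "b * (- 4 * a) = - 4 * a * b" by simp
  have u1_eq: "u1 = vec (n+1) (\<lambda>i. if i = 0 then b * (l - c0 - 2 * a) else 1)" unfolding u1_def tc(2) bm ..
  have Mu1: "M *\<^sub>v u1 = l \<cdot>\<^sub>v u1" unfolding M_def u1_eq by (rule ev_quad[OF n b q0])
  have Mu2: "M *\<^sub>v u2 = l \<cdot>\<^sub>v u2" unfolding M_def u2_def tc(3)[symmetric] by (rule ev_alt[OF n ev])
  have MC: "M \<in> carrier_mat (n+1) (n+1)" unfolding M_def by (rule mmat_carrier)
  have "kernel_dim (char_matrix M l) = 2"
  proof (rule kernel_dim_2[OF char_carrier[of n a b c0 l, folded M_def] u1 u2])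
    fix \<alpha> \<beta> :: real assume h: "\<alpha> \<cdot>\<^sub>v u1 + \<beta> \<cdot>\<^sub>v u2 = 0\<^sub>v (n+1)"
    have "(\<alpha> \<cdot>\<^sub>v u1 + \<beta> \<cdot>\<^sub>v u2) $ 0 = 0" unfolding h by simp
    hence "\<alpha> * (- 4 * a * b) = 0" unfolding u1_def u2_def by simp
    moreover have "b \<noteq> 0" using b by auto
    ultimately have a0: "\<alpha> = 0" using a by simp
    have "(\<alpha> \<cdot>\<^sub>v u1 + \<beta> \<cdot>\<^sub>v u2) $ 1 = 0" unfolding h using n by simp
    hence "\<alpha> + \<beta> = 0" unfolding u1_def u2_def using n by simp
    with a0 show "\<alpha> = 0 \<and> \<beta> = 0" by simp
  next
    fix v :: "real vec" assume v: "v \<in> carrier_vec (n+1)"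
    have "char_matrix M l *\<^sub>v v = 0\<^sub>v (n+1) \<longleftrightarrow> M *\<^sub>v v = l \<cdot>\<^sub>v v"
      unfolding M_def by (rule char_ker[OF mmat_carrier v])
    also have "\<dots> \<longleftrightarrow> (\<exists>\<alpha> \<beta>. v = \<alpha> \<cdot>\<^sub>v u1 + \<beta> \<cdot>\<^sub>v u2)"
    proof
      assume evv: "M *\<^sub>v v = l \<cdot>\<^sub>v v"
      define m where "m = (\<Sum>j<n. v$Suc j)/real n"
      define X where "X = v$0 + 4 * a * b * m"
      define W where "W = (\<Sum>j<n. (v$Suc j + v$Suc (nx n j) - 2 * m)^2)"
      have "0 = p * X^2 - a * W"
        using trans_core[OF n a b v evv[unfolded M_def c0_def]] unfolding l_def p_def X_def W_def m_def by simp
      hence "0 = a * p * X^2 - a * a * W" by (simp add: algebra_simps)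
      moreover have "a * p = - real n / 4" unfolding p_def using a by simp
      ultimately have e0: "(real n / 4) * X^2 + (a * a) * W = 0" by simp
      have W0: "W \<ge> 0" unfolding W_def by (intro sum_nonneg) auto
      have t1: "(real n / 4) * X^2 \<ge> 0" by simp
      have t2: "(a * a) * W \<ge> 0" using W0 by simp
      from e0 t1 t2 have "(real n / 4) * X^2 = 0" "(a * a) * W = 0" by linarith+
      hence X0: "X = 0" and W00: "W = 0" using n a by auto
      have v0: "v$0 = - 4 * a * b * m" using X0 unfolding X_def by simp
      have hj: "v$Suc j + v$Suc (nx n j) - 2 * m = 0" if "j < n" for j
        using sq_sum_zero[of "\<lambda>j. v$Suc j + v$Suc (nx n j) - 2 * m" n j] W00 that unfolding W_def by simp
      from trans_struct[OF v v0 hj] show "\<exists>\<alpha> \<beta>. v = \<alpha> \<cdot>\<^sub>v u1 + \<beta> \<cdot>\<^sub>v u2"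
        unfolding u1_def u2_def by blast
    next
      assume "\<exists>\<alpha> \<beta>. v = \<alpha> \<cdot>\<^sub>v u1 + \<beta> \<cdot>\<^sub>v u2"
      then obtain \<alpha> \<beta> where vv: "v = \<alpha> \<cdot>\<^sub>v u1 + \<beta> \<cdot>\<^sub>v u2" by auto
      have "M *\<^sub>v v = M *\<^sub>v (\<alpha> \<cdot>\<^sub>v u1) + M *\<^sub>v (\<beta> \<cdot>\<^sub>v u2)"
        unfolding vv by (rule mult_add_distrib_mat_vec[OF MC]) (use u1 u2 in auto)
      also have "\<dots> = l \<cdot>\<^sub>v (\<alpha> \<cdot>\<^sub>v u1) + l \<cdot>\<^sub>v (\<beta> \<cdot>\<^sub>v u2)"
        using scal_ev[OF MC u1 Mu1] scal_ev[OF MC u2 Mu2] by simp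
      also have "\<dots> = l \<cdot>\<^sub>v v" unfolding vv
        by (rule smult_add_distrib_vec[symmetric]) (use u1 u2 in auto)
      finally show "M *\<^sub>v v = l \<cdot>\<^sub>v v" .
    qed
    finally show "char_matrix M l *\<^sub>v v = 0\<^sub>v (n+1) \<longleftrightarrow> (\<exists>\<alpha> \<beta>. v = \<alpha> \<cdot>\<^sub>v u1 + \<beta> \<cdot>\<^sub>v u2)" .
  qed
  thus ?thesis by (simp add: eig_mult_kernel M_def c0_def l_def)
qed

lemma trans_q:
  fixes n :: nat and a c :: real
  assumes a: "a \<noteq> 0"
  shows "(l_trans n a + real n * c) * (l_trans n a - c - 2 * a)
     = real n + (c_trans n a - c) * (- real n / (4 * a) + 4 * a * real n - real n * (c_trans n a - c))"
proof -
  define c0 where "c0 = c_trans n a"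
  define l where "l = l_trans n a"
  define p where "p = - real n / (4 * a)"
  define t where "t = c0 - c"
  note tc = trans_consts[OF a, of n, folded c0_def l_def p_def]
  have A: "l + real n * c = p - real n * t" unfolding t_def using tc(1) by (simp add: algebra_simps)
  have B: "l - c - 2 * a = t - 4 * a" unfolding t_def using tc(2) by (simp add: algebra_simps)
  have ap: "4 * a * p = - real n" unfolding p_def using a by simp
  have "(l + real n * c) * (l - c - 2 * a) = (p - real n * t) * (t - 4 * a)" unfolding A B ..
  also have "\<dots> = p * t - (4 * a * p) - real n * t * t + 4 * a * real n * t"
    by (simp add: algebra_simps)
  also have "\<dots> = real n + t * (p + 4 * a * real n - real n * t)" unfolding ap by (simp add: algebra_simps)
  finally show ?thesis unfolding c0_def l_def p_def t_def .
qed

lemma alt_eigen: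
  fixes n :: nat and a b c :: real
  assumes n: "n \<ge> 3" and ev: "even n"
  shows "eigenvalue (mmat n a b c) (c - 2 * a)"
  by (rule eigenvalueI[OF ev_alt[OF n ev]]) (use n in auto)

lemma trans_max_part:
  fixes n :: nat and a b :: real
  assumes n: "n \<ge> 3" and ev: "even n" and b: "b = 1 \<or> b = -1" and a: "a \<le> -1/4"
  shows "lam_max n a b (c_trans n a) = l_trans n a \<and> (\<forall>c. l_trans n a \<le> lam_max n a b c)"
proof -
  have a0: "a \<noteq> 0" "a < 0" using a by auto
  define c0 where "c0 = c_trans n a"
  define l where "l = l_trans n a"
  define M where "M = mmat n a b c0"
  define p where "p = - real n / (4 * a)"
  note tc = trans_consts[OF a0(1), of n, folded c0_def l_def p_def]
  have q0: "(l + real n * c0) * (l - c0 - 2 * a) = real n" unfolding tc(1) tc(2) p_def using a0 by simp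
  have "real n / (4 * a) \<le> 0" by (rule divide_nonneg_neg) (use a0 in auto)
  hence p0: "p \<ge> 0" unfolding p_def by simp
  have evl: "eigenvalue M l" unfolding M_def by (rule quad_eigen[OF n b q0])
  have le: "k \<le> l" if "eigenvalue M k" for k
  proof -
    from evE[OF that[unfolded M_def]] obtain v where v: "v \<in> carrier_vec (n+1)" "v \<noteq> 0\<^sub>v (n+1)"
      "mmat n a b c0 *\<^sub>v v = k \<cdot>\<^sub>v v" .
    define m where "m = (\<Sum>j<n. v$Suc j)/real n"
    define X where "X = v$0 + 4 * a * b * m"
    define W where "W = (\<Sum>j<n. (v$Suc j + v$Suc (nx n j) - 2 * m)^2)"
    have W0: "W \<ge> 0" unfolding W_def by (intro sum_nonneg) auto
    have "(l - k) * ((v$0)^2 + (\<Sum>j<n. (v$Suc j)^2)) = p * X^2 - a * W"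
      using trans_core[OF n a0(1) b v(1) v(3)[unfolded c0_def]] unfolding l_def p_def X_def W_def m_def by simp
    also have "\<dots> \<ge> 0"
    proof -
      have "p * X^2 \<ge> 0" by (rule mult_nonneg_nonneg) (use p0 in auto)
      moreover have "(- a) * W \<ge> 0" by (rule mult_nonneg_nonneg) (use a0 W0 in auto)
      ultimately show ?thesis by simp
    qed
    finally have "(l - k) * ((v$0)^2 + (\<Sum>j<n. (v$Suc j)^2)) \<ge> 0" .
    from le_from_T[OF this norm_pos[OF v(1,2)]] show ?thesis by simp
  qed
  have part1: "lam_max n a b c0 = l" by (rule lam_max_eq[OF evl[unfolded M_def] le[unfolded M_def]])
  have part2: "l \<le> lam_max n a b c" for c
  proof (cases "c \<ge> c0")
    case True
    have "l \<le> c - 2 * a" using True tc(3) by simp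
    with lam_max_ge[OF alt_eigen[OF n ev]] show ?thesis by (meson order_trans)
  next
    case False
    define t where "t = c0 - c"
    have t: "t > 0" using False unfolding t_def by simp
    have "(p + 4 * a * real n) * (4 * a) = real n * (16 * a^2 - 1)"
      unfolding p_def using a0 by (simp add: algebra_simps power2_eq_square)
    moreover have "16 * a^2 - 1 \<ge> 0"
    proof -
      have "-a \<ge> 1/4" using a by simp
      hence "(-a) * (-a) \<ge> (1/4) * (1/4)" by (intro mult_mono) auto
      thus ?thesis by (simp add: power2_eq_square)
    qed
    ultimately have "(p + 4 * a * real n) * (4 * a) \<ge> 0" by simp
    hence pa: "p + 4 * a * real n \<le> 0" using a0 by (simp add: zero_le_mult_iff)
    have "real n * t \<ge> 0" using t by simp
    hence "p + 4 * a * real n - real n * t \<le> 0" using pa by linarith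
    hence "t * (p + 4 * a * real n - real n * t) \<le> 0"
      using t by (intro mult_nonneg_nonpos) auto
    hence "(l + real n * c) * (l - c - 2 * a) \<le> real n"
      using trans_q[OF a0(1), of n c] unfolding c0_def[symmetric] l_def[symmetric] p_def[symmetric] t_def[symmetric] by simp
    from quad_roots(1)[OF _ this] n obtain \<mu> where mu: "\<mu> \<ge> l" "(\<mu> + real n * c) * (\<mu> - c - 2 * a) = real n" by auto
    have "eigenvalue (mmat n a b c) \<mu>" by (rule quad_eigen[OF n b mu(2)])
    from lam_max_ge[OF this] mu(1) show ?thesis by simp
  qed
  show ?thesis using part1 part2 unfolding c0_def l_def by blast
qed

lemma trans_min_part:
  fixes n :: nat and a b :: real
  assumes n: "n \<ge> 3" and ev: "even n" and b: "b = 1 \<or> b = -1" and a: "a \<ge> 1/4"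
  shows "lam_min n a b (c_trans n a) = l_trans n a \<and> (\<forall>c. lam_min n a b c \<le> l_trans n a)"
proof -
  have a0: "a \<noteq> 0" "a > 0" using a by auto
  define c0 where "c0 = c_trans n a"
  define l where "l = l_trans n a"
  define M where "M = mmat n a b c0"
  define p where "p = - real n / (4 * a)"
  note tc = trans_consts[OF a0(1), of n, folded c0_def l_def p_def]
  have q0: "(l + real n * c0) * (l - c0 - 2 * a) = real n" unfolding tc(1) tc(2) p_def using a0 by simp
  have "real n / (4 * a) \<ge> 0" by (rule divide_nonneg_pos) (use a0 in auto)
  hence p0: "p \<le> 0" unfolding p_def by simp
  have evl: "eigenvalue M l" unfolding M_def by (rule quad_eigen[OF n b q0])
  have le: "l \<le> k" if "eigenvalue M k" for k
  proof -
    from evE[OF that[unfolded M_def]] obtain v where v: "v \<in> carrier_vec (n+1)" "v \<noteq> 0\<^sub>v (n+1)"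
      "mmat n a b c0 *\<^sub>v v = k \<cdot>\<^sub>v v" .
    define m where "m = (\<Sum>j<n. v$Suc j)/real n"
    define X where "X = v$0 + 4 * a * b * m"
    define W where "W = (\<Sum>j<n. (v$Suc j + v$Suc (nx n j) - 2 * m)^2)"
    have W0: "W \<ge> 0" unfolding W_def by (intro sum_nonneg) auto
    have "(l - k) * ((v$0)^2 + (\<Sum>j<n. (v$Suc j)^2)) = p * X^2 - a * W"
      using trans_core[OF n a0(1) b v(1) v(3)[unfolded c0_def]] unfolding l_def p_def X_def W_def m_def by simp
    hence "(k - l) * ((v$0)^2 + (\<Sum>j<n. (v$Suc j)^2)) = (- p) * X^2 + a * W" by (simp add: algebra_simps)
    also have "\<dots> \<ge> 0"
    proof -
      have "(- p) * X^2 \<ge> 0" by (rule mult_nonneg_nonneg) (use p0 in auto)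
      moreover have "a * W \<ge> 0" by (rule mult_nonneg_nonneg) (use a0 W0 in auto)
      ultimately show ?thesis by simp
    qed
    finally have "(k - l) * ((v$0)^2 + (\<Sum>j<n. (v$Suc j)^2)) \<ge> 0" .
    from le_from_T[OF this norm_pos[OF v(1,2)]] show ?thesis by simp
  qed
  have part1: "lam_min n a b c0 = l" by (rule lam_min_eq[OF evl[unfolded M_def] le[unfolded M_def]])
  have part2: "lam_min n a b c \<le> l" for c
  proof (cases "c \<le> c0")
    case True
    have "c - 2 * a \<le> l" using True tc(3) by simp
    with lam_min_le[OF alt_eigen[OF n ev]] show ?thesis by (meson order_trans)
  next
    case False
    define t where "t = c0 - c"
    have t: "t < 0" using False unfolding t_def by simp
    have "(p + 4 * a * real n) * (4 * a) = real n * (16 * a^2 - 1)"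
      unfolding p_def using a0 by (simp add: algebra_simps power2_eq_square)
    moreover have "16 * a^2 - 1 \<ge> 0"
    proof -
      have "a * a \<ge> (1/4) * (1/4)" using a by (intro mult_mono) auto
      thus ?thesis by (simp add: power2_eq_square)
    qed
    ultimately have "(p + 4 * a * real n) * (4 * a) \<ge> 0" by simp
    hence pa: "p + 4 * a * real n \<ge> 0" using a0 by (simp add: zero_le_mult_iff)
    have "real n * t \<le> 0" by (rule mult_nonneg_nonpos) (use t in auto)
    hence "p + 4 * a * real n - real n * t \<ge> 0" using pa by simp
    hence "t * (p + 4 * a * real n - real n * t) \<le> 0"
      using t by (intro mult_nonpos_nonneg) auto
    hence "(l + real n * c) * (l - c - 2 * a) \<le> real n"
      using trans_q[OF a0(1), of n c] unfolding c0_def[symmetric] l_def[symmetric] p_def[symmetric] t_def[symmetric] by simp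
    from quad_roots(2)[OF _ this] n obtain \<mu> where mu: "\<mu> \<le> l" "(\<mu> + real n * c) * (\<mu> - c - 2 * a) = real n" by auto
    have "eigenvalue (mmat n a b c) \<mu>" by (rule quad_eigen[OF n b mu(2)])
    from lam_min_le[OF this] mu(1) show ?thesis by simp
  qed
  show ?thesis using part1 part2 unfolding c0_def l_def by blast
qed

theorem corollary5:
  fixes n :: nat and a b :: real
  assumes "even n" and "n > 2" and "b = 1 \<or> b = -1"
  shows
   "(a \<le> -1/4 \<longrightarrow>
       lam_max n a b (c_trans n a) = l_trans n a
     \<and> (\<forall>c. l_trans n a \<le> lam_max n a b c)
     \<and> eig_mult (mmat n a b (c_trans n a)) (l_trans n a) = 2)
  \<and> (a > -1/4 \<longrightarrow>
       lam_max n a b (c_low n a) = l_low n a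
     \<and> (\<forall>c. l_low n a \<le> lam_max n a b c)
     \<and> eig_mult (mmat n a b (c_low n a)) (l_low n a) = 1)
  \<and> (a \<ge> 1/4 \<longrightarrow>
       lam_min n a b (c_trans n a) = l_trans n a
     \<and> (\<forall>c. lam_min n a b c \<le> l_trans n a)
     \<and> eig_mult (mmat n a b (c_trans n a)) (l_trans n a) = 2)
  \<and> (a < 1/4 \<longrightarrow>
       lam_min n a b (c_upp n a) = l_upp n a
     \<and> (\<forall>c. lam_min n a b c \<le> l_upp n a)
     \<and> eig_mult (mmat n a b (c_upp n a)) (l_upp n a) = 1)"
proof -
  have n: "n \<ge> 3" using assms(2) by simp
  note ev = assms(1) and b = assms(3)
  show ?thesis
  proof (intro conjI impI)
    assume a: "a \<le> -1/4"
    show "lam_max n a b (c_trans n a) = l_trans n a" using trans_max_part[OF n ev b a] by blast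
    show "\<forall>c. l_trans n a \<le> lam_max n a b c" using trans_max_part[OF n ev b a] by blast
    show "eig_mult (mmat n a b (c_trans n a)) (l_trans n a) = 2" using trans_mult[OF n ev b] a by simp
  next
    assume a: "a > -1/4"
    show "lam_max n a b (c_low n a) = l_low n a" using low_part[OF n b a] by blast
    show "\<forall>c. l_low n a \<le> lam_max n a b c" using low_part[OF n b a] by blast
    show "eig_mult (mmat n a b (c_low n a)) (l_low n a) = 1" using low_part[OF n b a] by blast
  next
    assume a: "a \<ge> 1/4"
    show "lam_min n a b (c_trans n a) = l_trans n a" using trans_min_part[OF n ev b a] by blast
    show "\<forall>c. lam_min n a b c \<le> l_trans n a" using trans_min_part[OF n ev b a] by blast
    show "eig_mult (mmat n a b (c_trans n a)) (l_trans n a) = 2" using trans_mult[OF n ev b] a by simp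
  next
    assume a: "a < 1/4"
    show "lam_min n a b (c_upp n a) = l_upp n a" using upp_part[OF n b a] by blast
    show "\<forall>c. lam_min n a b c \<le> l_upp n a" using upp_part[OF n b a] by blast
    show "eig_mult (mmat n a b (c_upp n a)) (l_upp n a) = 1" using upp_part[OF n b a] by blast
  qed
qed

end
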